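(* Let $A\in\mathbb{R}^{d\times d}$, consider the sequence $\{x_k\}$ generated by $x_{k+1}=Ax_k$ for $k\ge 0$, and let $E$ be a linear subspace of $\mathbb{R}^d$. Then the following statements are equivalent: (1) $E$ is invariant under $A$ (i.e. $x\in E\Rightarrow Ax\in E$), and $E\supseteq E_{A,\ge 1}$, where $E_{A,\ge1}$ denotes the subspace spanned by all generalized eigenvectors of $A$ corresponding to eigenvalues with modulus greater than or equal to one. (2) There exist a seminorm $p$ with $\ker(p)=E$ and constants $\alpha,\beta>0$ such that $p(x_k)\le \alpha\, p(x_0)e^{-\beta k}$ for all $k\ge 0$ and all $x_0\in\mathbb{R}^d$. (3) For any seminorm $p$ with $\ker(p)=E$, there exist constants $\alpha,\beta>0$ such that $p(x_k)\le \alpha\, p(x_0)e^{-\beta k}$ for all $k\ge0$ and all $x_0\in\mathbb{R}^d$. (4) There exist matrices $P,Q\in\mathcal{S}^d_{+,E}$ satisfying $A^\top PA-P+Q=0$. (5) For any $Q\in\mathcal{S}^d_{+,E}$, there exists a unique $P\in\mathcal{S}^d_{+,E}$ satisfying $A^\top PA-P+Q=0$. Consequently, the smallest subspace $E$ for which any of these statements holds is $E=E_{A,\ge1}$.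
   Context: A seminorm on $\mathbb{R}^d$ is a function $p:\mathbb{R}^d\to[0,\infty)$ that is absolutely homogeneous and satisfies the triangle inequality; its kernel is $\ker(p)=\{x: p(x)=0\}$. $\mathcal{S}^d_{+,E}=\{B\in\mathbb{R}^{d\times d}: B \text{ symmetric positive semi-definite},\ \ker(B)=E\}$. *)

theory Defs
  imports "HOL-Analysis.Analysis"
begin

definition seminorm :: "(real^'n \<Rightarrow> real) \<Rightarrow> bool" where
  "seminorm p \<longleftrightarrow> (\<forall>x. p x \<ge> 0) \<and> (\<forall>c x. p (c *\<^sub>R x) = \<bar>c\<bar> * p x)
     \<and> (\<forall>x y. p (x + y) \<le> p x + p y)"

definition seminorm_ker :: "(real^'n \<Rightarrow> real) \<Rightarrow> (real^'n) set" where
  "seminorm_ker p = {x. p x = 0}"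

definition psd_ker :: "(real^'n) set \<Rightarrow> (real^'n^'n) set" where
  "psd_ker E = {B. transpose B = B \<and> (\<forall>x. x \<bullet> (B *v x) \<ge> 0) \<and> {x. B *v x = 0} = E}"

definition cmat :: "real^'n^'n \<Rightarrow> complex^'n^'n" where
  "cmat A = (\<chi> i j. complex_of_real (A $ i $ j))"

definition cvec :: "real^'n \<Rightarrow> complex^'n" where
  "cvec x = (\<chi> i. complex_of_real (x $ i))"

definition gen_eigenvector :: "real^'n^'n \<Rightarrow> complex \<Rightarrow> complex^'n \<Rightarrow> bool" where
  "gen_eigenvector A l v \<longleftrightarrow> v \<noteq> 0 \<and>
     (\<exists>k::nat. ((\<lambda>w. (cmat A - (\<chi> i j. if i = j then l else 0)) *v w) ^^ k) v = 0)"

definition E_ge1 :: "real^'n^'n \<Rightarrow> (real^'n) set" where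
  "E_ge1 A = {x. cvec x \<in> vec.span {v. \<exists>l. cmod l \<ge> 1 \<and> gen_eigenvector A l v}}"

definition orbit :: "real^'n^'n \<Rightarrow> real^'n \<Rightarrow> nat \<Rightarrow> real^'n" where
  "orbit A x0 k = (((*v) A) ^^ k) x0"

definition cond1 :: "real^'n^'n \<Rightarrow> (real^'n) set \<Rightarrow> bool" where
  "cond1 A E \<longleftrightarrow> (\<forall>x\<in>E. A *v x \<in> E) \<and> E_ge1 A \<subseteq> E"

definition cond2 :: "real^'n^'n \<Rightarrow> (real^'n) set \<Rightarrow> bool" where
  "cond2 A E \<longleftrightarrow> (\<exists>p. seminorm p \<and> seminorm_ker p = E \<and>
     (\<exists>\<alpha> \<beta>. \<alpha> > 0 \<and> \<beta> > 0 \<and>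
        (\<forall>k x0. p (orbit A x0 k) \<le> \<alpha> * p x0 * exp (- \<beta> * real k))))"

definition cond3 :: "real^'n^'n \<Rightarrow> (real^'n) set \<Rightarrow> bool" where
  "cond3 A E \<longleftrightarrow> (\<forall>p. seminorm p \<and> seminorm_ker p = E \<longrightarrow>
     (\<exists>\<alpha> \<beta>. \<alpha> > 0 \<and> \<beta> > 0 \<and>
        (\<forall>k x0. p (orbit A x0 k) \<le> \<alpha> * p x0 * exp (- \<beta> * real k))))"

definition cond4 :: "real^'n^'n \<Rightarrow> (real^'n) set \<Rightarrow> bool" where
  "cond4 A E \<longleftrightarrow> (\<exists>P\<in>psd_ker E. \<exists>Q\<in>psd_ker E. transpose A ** P ** A - P + Q = 0)"

definition cond5 :: "real^'n^'n \<Rightarrow> (real^'n) set \<Rightarrow> bool" where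
  "cond5 A E \<longleftrightarrow> (\<forall>Q\<in>psd_ker E. \<exists>!P. P \<in> psd_ker E \<and> transpose A ** P ** A - P + Q = 0)"

end

theory Submission
  imports Defs "HOL-Computational_Algebra.Polynomial_Factorial"
    "HOL-Computational_Algebra.Fundamental_Theorem_Algebra" "HOL-Computational_Algebra.Field_as_Ring"
begin

lemma mv_axis: "(M *v axis j 1) $ i = M $ i $ j" for M :: "real^'n^'m"
  by (simp add: matrix_vector_mult_def axis_def if_distrib cong: if_cong)

lemma axis_inner: "axis i 1 \<bullet> v = v $ i" for v :: "real^'n"
  by (simp add: inner_axis')

lemma inner_axis_mv: "axis i 1 \<bullet> (M *v axis j 1) = M $ i $ j" for M :: "real^'n^'n"
  by (simp add: axis_inner mv_axis)

lemma forms_eq: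
  fixes M N :: "real^'n^'n"
  assumes "\<And>x y. x \<bullet> (M *v y) = x \<bullet> (N *v y)"
  shows "M = N"
proof -
  have "M $ i $ j = N $ i $ j" for i j
    using assms[of "axis i 1" "axis j 1"] by (simp add: inner_axis_mv)
  then show ?thesis by (simp add: vec_eq_iff)
qed

lemma dot_transpose: "x \<bullet> (transpose M *v y) = (M *v x) \<bullet> y" for M :: "real^'n^'n"
  by (metis dot_lmul_matrix inner_commute transpose_matrix_vector)

lemma proj_exists:
  fixes E :: "(real^'n) set"
  assumes sE: "subspace E"
  shows "\<exists>P. (\<forall>x. P *v x = 0 \<longleftrightarrow> x \<in> E) \<and> transpose P = P \<and> (\<forall>x. P *v (P *v x) = P *v x)"
proof -
  define R where "R x z \<longleftrightarrow> x - z \<in> E \<and> (\<forall>w\<in>E. orthogonal z w)" for x z :: "real^'n"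
  have ex: "\<exists>z. R x z" for x
  proof -
    obtain y z where "y \<in> span E" "\<And>w. w \<in> span E \<Longrightarrow> orthogonal z w" "x = y + z"
      using orthogonal_subspace_decomp_exists[of E x] by blast
    moreover have "span E = E" using sE by (simp add: span_eq_iff)
    ultimately have "R x z" using sE unfolding R_def by auto
    then show ?thesis by blast
  qed
  have uniq: "z1 = z2" if "R x z1" "R x z2" for x z1 z2
  proof -
    have "z1 - z2 = (x - z2) - (x - z1)" by simp
    also have "\<dots> \<in> E" using subspace_diff[OF sE, of "x - z2" "x - z1"] that unfolding R_def by blast
    finally have "orthogonal z1 (z1 - z2)" "orthogonal z2 (z1 - z2)" using that unfolding R_def by auto
    then have "(z1 - z2) \<bullet> (z1 - z2) = 0" unfolding orthogonal_def by (simp add: inner_diff_left)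
    then show ?thesis by simp
  qed
  define g where "g x = (SOME z. R x z)" for x
  have Rg: "R x (g x)" for x unfolding g_def using ex someI_ex by metis
  have g_eq: "g x = z" if "R x z" for x z using uniq Rg that by blast
  have gadd: "g (x + y) = g x + g y" for x y
  proof (rule g_eq)
    have e1: "x - g x \<in> E" "y - g y \<in> E" using Rg unfolding R_def by auto
    have "x + y - (g x + g y) \<in> E" using subspace_add[OF sE e1] by (simp add: algebra_simps)
    then show "R (x + y) (g x + g y)" using Rg[of x] Rg[of y] sE unfolding R_def orthogonal_def
      by (auto simp: inner_add_left)
  qed
  have gscale: "g (c *\<^sub>R x) = c *\<^sub>R g x" for c x
  proof (rule g_eq)
    have "c *\<^sub>R x - c *\<^sub>R g x = c *\<^sub>R (x - g x)" by (simp add: scaleR_diff_right)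
    then show "R (c *\<^sub>R x) (c *\<^sub>R g x)" using Rg[of x] sE unfolding R_def orthogonal_def
      by (auto simp: subspace_scale)
  qed
  have lin: "linear g" by (rule linearI) (use gadd gscale in auto)
  define P where "P = matrix g"
  have Pg: "P *v x = g x" for x unfolding P_def using lin by (simp add: matrix_vector_mul(2))
  have ker: "P *v x = 0 \<longleftrightarrow> x \<in> E" for x
  proof
    assume "P *v x = 0" then show "x \<in> E" using Rg[of x] Pg unfolding R_def by auto
  next
    assume "x \<in> E" then have "R x 0" unfolding R_def by (auto simp: orthogonal_def)
    then show "P *v x = 0" using g_eq Pg by auto
  qed
  have idem: "P *v (P *v x) = P *v x" for x
  proof -
    have "R (g x) (g x)" using Rg[of x] sE unfolding R_def by (auto simp: subspace_0)
    then show ?thesis using g_eq Pg by auto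
  qed
  have symg: "x \<bullet> g y = g x \<bullet> g y" for x y
  proof -
    have "(x - g x) \<bullet> g y = 0" using Rg[of x] Rg[of y] unfolding R_def orthogonal_def
      by (auto simp: inner_commute)
    then show ?thesis by (simp add: inner_diff_left)
  qed
  have "transpose P = P"
  proof (rule forms_eq)
    fix x y :: "real^'n"
    have "x \<bullet> (transpose P *v y) = g x \<bullet> y" by (subst dot_transpose) (simp add: Pg)
    also have "\<dots> = g x \<bullet> g y" using symg[of y x] by (simp add: inner_commute)
    also have "\<dots> = x \<bullet> (P *v y)" using symg[of x y] Pg by simp
    finally show "x \<bullet> (transpose P *v y) = x \<bullet> (P *v y)" .
  qed
  then show ?thesis using ker idem by blast
qed

lemma seminorm_0: "seminorm p \<Longrightarrow> p 0 = 0"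
  unfolding seminorm_def by (metis abs_zero mult_zero_left scaleR_zero_left)

lemma seminorm_neg: "seminorm p \<Longrightarrow> p (- x) = p x"
  unfolding seminorm_def by (metis abs_minus_cancel abs_one mult_1 scaleR_minus1_left)

lemma seminorm_nonneg: "seminorm p \<Longrightarrow> 0 \<le> p x"
  unfolding seminorm_def by auto

lemma seminorm_add: "seminorm p \<Longrightarrow> p (x + y) \<le> p x + p y"
  unfolding seminorm_def by auto

lemma seminorm_scale: "seminorm p \<Longrightarrow> p (c *\<^sub>R x) = \<bar>c\<bar> * p x"
  unfolding seminorm_def by auto

lemma seminorm_sum: "seminorm p \<Longrightarrow> p (sum f S) \<le> (\<Sum>i\<in>S. p (f i))"
proof (induction S rule: infinite_finite_induct)
  case (infinite S) then show ?case by (simp add: seminorm_0)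
next
  case empty then show ?case by (simp add: seminorm_0)
next
  case (insert x F)
  then show ?case using seminorm_add[OF insert.prems, of "f x" "sum f F"] by simp
qed

lemma seminorm_bound:
  fixes p :: "real^'n \<Rightarrow> real"
  assumes "seminorm p"
  shows "\<exists>K\<ge>0. \<forall>x. p x \<le> K * norm x"
proof -
  define K where "K = (\<Sum>i\<in>UNIV. p (axis i 1))"
  have "K \<ge> 0" unfolding K_def using seminorm_nonneg[OF assms] by (simp add: sum_nonneg)
  moreover have "p x \<le> K * norm x" for x
  proof -
    have "p x = p (\<Sum>i\<in>UNIV. x $ i *\<^sub>R axis i 1)"
      using basis_expansion[of x] by (simp add: scalar_mult_eq_scaleR)
    also have "\<dots> \<le> (\<Sum>i\<in>UNIV. p (x $ i *\<^sub>R axis i 1))" by (rule seminorm_sum[OF assms])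
    also have "\<dots> = (\<Sum>i\<in>UNIV. \<bar>x $ i\<bar> * p (axis i 1))" by (simp add: seminorm_scale[OF assms])
    also have "\<dots> \<le> (\<Sum>i\<in>UNIV. norm x * p (axis i 1))"
      by (rule sum_mono, rule mult_right_mono) (auto simp: component_le_norm_cart seminorm_nonneg[OF assms])
    also have "\<dots> = K * norm x" unfolding K_def by (simp add: sum_distrib_left mult.commute)
    finally show ?thesis .
  qed
  ultimately show ?thesis by blast
qed

locale projE =
  fixes E :: "(real^'n) set" and Pm :: "real^'n^'n"
  assumes subE: "subspace E" and kerP: "\<And>x. Pm *v x = 0 \<longleftrightarrow> x \<in> E"
    and symP: "transpose Pm = Pm" and idemP: "\<And>x. Pm *v (Pm *v x) = Pm *v x"
begin

lemma diff_in_E: "x - Pm *v x \<in> E"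
  using kerP[of "x - Pm *v x"] idemP[of x] by (simp add: matrix_vector_mult_diff_distrib)

lemma P_eq: "x - y \<in> E \<Longrightarrow> Pm *v x = Pm *v y"
  using kerP[of "x - y"] by (simp add: matrix_vector_mult_diff_distrib)

lemma P_proj_eq: "Pm *v (Pm *v x) = Pm *v x" by (rule idemP)

lemma seminorm_proj:
  assumes sp: "seminorm p" and kp: "seminorm_ker p = E"
  shows "p x = p (Pm *v x)"
proof -
  have z: "p (x - Pm *v x) = 0" using diff_in_E kp unfolding seminorm_ker_def by auto
  have "p x \<le> p (x - Pm *v x) + p (Pm *v x)" using seminorm_add[OF sp, of "x - Pm *v x" "Pm *v x"] by simp
  moreover have "p (Pm *v x) \<le> p x + p (Pm *v x - x)" using seminorm_add[OF sp, of x "Pm *v x - x"] by simp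
  moreover have "p (Pm *v x - x) = 0" using z seminorm_neg[OF sp, of "x - Pm *v x"] by simp
  ultimately show ?thesis using z by simp
qed

lemma seminorm_equiv:
  assumes sp: "seminorm p" and kp: "seminorm_ker p = E"
  shows "\<exists>c C. c > 0 \<and> C > 0 \<and> (\<forall>x. c * norm (Pm *v x) \<le> p x \<and> p x \<le> C * norm (Pm *v x))"
proof -
  obtain K where K: "K \<ge> 0" "\<And>x. p x \<le> K * norm x" using seminorm_bound[OF sp] by blast
  have up: "p x \<le> (K + 1) * norm (Pm *v x)" for x
  proof -
    have "p x = p (Pm *v x)" by (rule seminorm_proj[OF sp kp])
    also have "\<dots> \<le> K * norm (Pm *v x)" by (rule K(2))
    also have "\<dots> \<le> (K + 1) * norm (Pm *v x)" by (simp add: mult_right_mono)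
    finally show ?thesis .
  qed
  define S where "S = {y. Pm *v y = y \<and> norm y = 1}"
  have inS: "(1 / norm (Pm *v x)) *\<^sub>R (Pm *v x) \<in> S" if "Pm *v x \<noteq> 0" for x
    using that unfolding S_def by (simp add: matrix_vector_mult_scaleR idemP)
  have lowgen: "c * norm (Pm *v x) \<le> p x" if "\<forall>y\<in>S. c \<le> p y" for x c
  proof (cases "Pm *v x = 0")
    case True then show ?thesis using seminorm_nonneg[OF sp] by simp
  next
    case False
    define y where "y = (1 / norm (Pm *v x)) *\<^sub>R (Pm *v x)"
    have "y \<in> S" using inS False y_def by simp
    then have "c \<le> p y" using that by blast
    have "Pm *v x = norm (Pm *v x) *\<^sub>R y" using False y_def by simp
    then have "p (Pm *v x) = norm (Pm *v x) * p y" using seminorm_scale[OF sp] by (metis abs_norm_cancel)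
    then have "p x = norm (Pm *v x) * p y" using seminorm_proj[OF sp kp] by simp
    then show ?thesis using \<open>c \<le> p y\<close> by (metis mult.commute mult_right_mono norm_ge_zero)
  qed
  show ?thesis
  proof (cases "S = {}")
    case True
    have "\<forall>y\<in>S. 1 \<le> p y" using True by simp
    then have "1 * norm (Pm *v x) \<le> p x" for x using lowgen by blast
    then show ?thesis using up K(1) by (intro exI[of _ 1] exI[of _ "K+1"]) auto
  next
    case False
    have contp: "continuous_on S p"
    proof -
      have "K-lipschitz_on S p"
      proof (rule lipschitz_onI)
        fix x y
        have "p x \<le> p y + p (x - y)" using seminorm_add[OF sp, of y "x - y"] by simp
        moreover have "p y \<le> p x + p (y - x)" using seminorm_add[OF sp, of x "y - x"] by simp
        moreover have "p (y - x) = p (x - y)" using seminorm_neg[OF sp, of "x - y"] by simp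
        moreover have "p (x - y) \<le> K * norm (x - y)" by (rule K(2))
        ultimately show "dist (p x) (p y) \<le> K * dist x y" by (simp add: dist_norm abs_le_iff)
      qed (use K in auto)
      then show ?thesis by (rule lipschitz_on_continuous_on)
    qed
    have "compact S"
    proof -
      have cl: "closed S"
      proof -
        have "S = {y. Pm *v y = y} \<inter> {y. norm y = 1}" unfolding S_def by auto
        moreover have "closed {y. Pm *v y = y}"
          by (rule closed_Collect_eq) (auto intro: linear_continuous_on matrix_vector_mul_bounded_linear)
        moreover have "closed {y::real^'n. norm y = 1}"
          by (rule closed_Collect_eq) (auto intro: continuous_intros)
        ultimately show ?thesis by auto
      qed
      have "bounded S" unfolding S_def bounded_iff by auto
      then show ?thesis using cl compact_eq_bounded_closed by blast
    qed
    then obtain y0 where y0: "y0 \<in> S" "\<And>y. y \<in> S \<Longrightarrow> p y0 \<le> p y"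
      using continuous_attains_inf[OF _ False contp] by blast
    have "p y0 > 0"
    proof (rule ccontr)
      assume "\<not> p y0 > 0"
      then have "p y0 = 0" using seminorm_nonneg[OF sp, of y0] by simp
      then have "y0 \<in> E" using kp unfolding seminorm_ker_def by auto
      then have "Pm *v y0 = 0" using kerP by simp
      then show False using y0(1) unfolding S_def by auto
    qed
    moreover have "p y0 * norm (Pm *v x) \<le> p x" for x using lowgen[of "p y0"] y0 by blast
    ultimately show ?thesis using up K(1) by (intro exI[of _ "p y0"] exI[of _ "K+1"]) auto
  qed
qed

end

definition Stab :: "real^'n^'n \<Rightarrow> real^'n^'n \<Rightarrow> bool" where
  "Stab A Pm \<longleftrightarrow> (\<exists>\<alpha> \<beta>. \<alpha> > 0 \<and> \<beta> > 0 \<and>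
     (\<forall>k x. norm (Pm *v orbit A x k) \<le> \<alpha> * norm (Pm *v x) * exp (- \<beta> * real k)))"

fun mpow :: "real^'n^'n \<Rightarrow> nat \<Rightarrow> real^'n^'n" where
  "mpow A 0 = mat 1"
| "mpow A (Suc k) = A ** mpow A k"

lemma orbit_mpow: "orbit A x k = mpow A k *v x"
  by (induction k) (simp_all add: orbit_def matrix_vector_mul_lid matrix_vector_mul_assoc[symmetric])

lemma orbit_0[simp]: "orbit A x 0 = x" by (simp add: orbit_def)
lemma orbit_Suc: "orbit A x (Suc k) = A *v orbit A x k" by (simp add: orbit_def)
lemma orbit_Suc': "orbit A x (Suc k) = orbit A (A *v x) k" by (simp add: orbit_def funpow_Suc_right del: funpow.simps)
lemma orbit_add: "orbit A (x + y) k = orbit A x k + orbit A y k"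
  by (simp add: orbit_mpow matrix_vector_right_distrib)
lemma orbit_diff: "orbit A (x - y) k = orbit A x k - orbit A y k"
  by (simp add: orbit_mpow matrix_vector_mult_diff_distrib)
lemma orbit_scale: "orbit A (c *\<^sub>R x) k = c *\<^sub>R orbit A x k"
  by (simp add: orbit_mpow matrix_vector_mult_scaleR)

lemma norm_le_sum_norm_cart: "norm x \<le> (\<Sum>i\<in>UNIV. norm (x $ i))"
  unfolding norm_vec_def by (rule L2_set_le_sum) auto

lemma norm_mv_le: "norm (M *v y) \<le> real CARD('n) * norm M * norm y" for M :: "real^'n^'n"
proof -
  have c: "(M *v y) $ i = M $ i \<bullet> y" for i
    by (simp add: matrix_vector_mult_def inner_vec_def)
  have "norm (M *v y) \<le> (\<Sum>i\<in>UNIV. \<bar>(M *v y) $ i\<bar>)" by (rule norm_le_l1_cart)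
  also have "\<dots> \<le> (\<Sum>i\<in>(UNIV::'n set). norm M * norm y)"
  proof (rule sum_mono)
    fix i
    have "\<bar>(M *v y) $ i\<bar> \<le> norm (M $ i) * norm y" unfolding c by (rule Cauchy_Schwarz_ineq2)
    also have "\<dots> \<le> norm M * norm y" by (rule mult_right_mono[OF Finite_Cartesian_Product.norm_nth_le]) simp
    finally show "\<bar>(M *v y) $ i\<bar> \<le> norm M * norm y" .
  qed
  also have "\<dots> = real CARD('n) * norm M * norm y" by simp
  finally show ?thesis .
qed


lemma dot_sym: "transpose P = P \<Longrightarrow> y \<bullet> (P *v x) = x \<bullet> (P *v y)" for P :: "real^'n^'n"
  by (metis dot_transpose inner_commute)

lemma quad_disc:
  fixes a b c :: real
  assumes h: "\<And>t. 0 \<le> a + 2*t*b + t^2*c" and c: "0 \<le> c"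
  shows "b^2 \<le> a*c"
proof (cases "c = 0")
  case True
  have "b = 0"
  proof (rule ccontr)
    assume "b \<noteq> 0"
    have "0 \<le> a + 2*(-(a+1)/(2*b))*b + (-(a+1)/(2*b))^2*c" by (rule h)
    also have "\<dots> = -1" using \<open>b \<noteq> 0\<close> True by (simp add: field_simps)
    finally show False by simp
  qed
  then show ?thesis using True by simp
next
  case False
  then have cp: "c > 0" using c by simp
  have "0 \<le> a + 2*(-b/c)*b + (-b/c)^2*c" by (rule h)
  also have "\<dots> = (a*c - b^2)/c" using cp by (simp add: field_simps power2_eq_square)
  finally show ?thesis using cp by (simp add: divide_nonneg_pos zero_le_divide_iff)
qed

lemma psd_cs:
  fixes P :: "real^'n^'n"
  assumes sym: "transpose P = P" and pos: "\<And>x. 0 \<le> x \<bullet> (P *v x)"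
  shows "(x \<bullet> (P *v y))^2 \<le> (x \<bullet> (P *v x)) * (y \<bullet> (P *v y))"
proof (rule quad_disc)
  fix t :: real
  have "(x + t *\<^sub>R y) \<bullet> (P *v (x + t *\<^sub>R y)) =
        x \<bullet> (P *v x) + t * (x \<bullet> (P *v y)) + t * (y \<bullet> (P *v x)) + t * t * (y \<bullet> (P *v y))"
    by (simp add: matrix_vector_right_distrib matrix_vector_mult_scaleR inner_add_left inner_add_right algebra_simps)
  also have "\<dots> = x \<bullet> (P *v x) + 2 * t * (x \<bullet> (P *v y)) + t^2 * (y \<bullet> (P *v y))"
    using dot_sym[OF sym, of y x] by (simp add: power2_eq_square algebra_simps)
  finally show "0 \<le> x \<bullet> (P *v x) + 2 * t * (x \<bullet> (P *v y)) + t^2 * (y \<bullet> (P *v y))"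
    using pos[of "x + t *\<^sub>R y"] by simp
qed (rule pos)

lemma psd_zero:
  fixes P :: "real^'n^'n"
  assumes sym: "transpose P = P" and pos: "\<And>x. 0 \<le> x \<bullet> (P *v x)" and z: "x \<bullet> (P *v x) = 0"
  shows "P *v x = 0"
proof -
  have "((P *v x) \<bullet> (P *v x))^2 \<le> ((P *v x) \<bullet> (P *v (P *v x))) * (x \<bullet> (P *v x))"
    using psd_cs[OF sym pos, of "P *v x" x] dot_sym[OF sym, of "P *v x" x] by simp
  then have "((P *v x) \<bullet> (P *v x))^2 \<le> 0" using z by simp
  then have "((P *v x) \<bullet> (P *v x))^2 = 0" by (meson antisym zero_le_power2)
  then show ?thesis by simp
qed

lemma psd_kerD:
  assumes "P \<in> psd_ker E"
  shows "transpose P = P" "\<And>x. 0 \<le> x \<bullet> (P *v x)" "\<And>x. P *v x = 0 \<longleftrightarrow> x \<in> E"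
  using assms unfolding psd_ker_def by auto

lemma form_AtPA: "x \<bullet> ((transpose A ** P ** A) *v y) = (A *v x) \<bullet> (P *v (A *v y))"
  for A P :: "real^'n^'n"
proof -
  have "(transpose A ** P ** A) *v y = transpose A *v (P *v (A *v y))"
    by (simp add: matrix_vector_mul_assoc matrix_mul_assoc)
  then show ?thesis by (simp only: dot_transpose)
qed

lemma form_eqn:
  fixes A P Q :: "real^'n^'n"
  assumes "transpose A ** P ** A - P + Q = 0"
  shows "(A *v x) \<bullet> (P *v (A *v y)) = x \<bullet> (P *v y) - x \<bullet> (Q *v y)"
proof -
  have "x \<bullet> ((transpose A ** P ** A - P + Q) *v y) = 0" using assms by simp
  then have "x \<bullet> ((transpose A ** P ** A) *v y) - x \<bullet> (P *v y) + x \<bullet> (Q *v y) = 0"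
    by (simp add: matrix_vector_mult_add_rdistrib matrix_vector_mult_diff_rdistrib inner_add_right inner_diff_right)
  then show ?thesis unfolding form_AtPA by simp
qed

context projE
begin

lemma q_seminorm: "seminorm (\<lambda>x. norm (Pm *v x))" "seminorm_ker (\<lambda>x. norm (Pm *v x)) = E"
  unfolding seminorm_def seminorm_ker_def
  by (auto simp: matrix_vector_mult_scaleR matrix_vector_right_distrib norm_triangle_ineq kerP)

lemma form_proj:
  assumes "P \<in> psd_ker E"
  shows "x \<bullet> (P *v y) = (Pm *v x) \<bullet> (P *v (Pm *v y))"
proof -
  note d = psd_kerD[OF assms]
  have e: "P *v z = P *v (Pm *v z)" for z
    using d(3)[of "z - Pm *v z"] diff_in_E by (simp add: matrix_vector_mult_diff_distrib)
  have "x \<bullet> (P *v y) = (Pm *v y) \<bullet> (P *v x)" using e[of y] dot_sym[OF d(1), of x "Pm *v y"] by simp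
  also have "\<dots> = (Pm *v x) \<bullet> (P *v (Pm *v y))" using e[of x] dot_sym[OF d(1), of "Pm *v y" "Pm *v x"] by simp
  finally show ?thesis .
qed

lemma form_bound:
  assumes "P \<in> psd_ker E"
  shows "\<exists>K>0. \<forall>x y. \<bar>x \<bullet> (P *v y)\<bar> \<le> K * norm (Pm *v x) * norm (Pm *v y)"
proof -
  define K where "K = real CARD('n) * norm P + 1"
  have Kp: "K > 0" unfolding K_def by (simp add: add_nonneg_pos)
  have "\<bar>x \<bullet> (P *v y)\<bar> \<le> K * norm (Pm *v x) * norm (Pm *v y)" for x y
  proof -
    have "\<bar>x \<bullet> (P *v y)\<bar> = \<bar>(Pm *v x) \<bullet> (P *v (Pm *v y))\<bar>" using form_proj[OF assms] by simp
    also have "\<dots> \<le> norm (Pm *v x) * norm (P *v (Pm *v y))" by (rule Cauchy_Schwarz_ineq2)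
    also have "\<dots> \<le> norm (Pm *v x) * (real CARD('n) * norm P * norm (Pm *v y))"
      by (rule mult_left_mono[OF norm_mv_le]) simp
    also have "\<dots> \<le> norm (Pm *v x) * (K * norm (Pm *v y))"
      by (rule mult_left_mono, rule mult_right_mono) (auto simp: K_def)
    finally show ?thesis by (simp add: mult_ac)
  qed
  then show ?thesis using Kp by blast
qed

lemma psd_seminorm:
  assumes "P \<in> psd_ker E"
  shows "seminorm (\<lambda>x. sqrt (x \<bullet> (P *v x)))" "seminorm_ker (\<lambda>x. sqrt (x \<bullet> (P *v x))) = E"
proof -
  note d = psd_kerD[OF assms]
  show "seminorm (\<lambda>x. sqrt (x \<bullet> (P *v x)))"
    unfolding seminorm_def
  proof (intro conjI allI)
    fix x show "0 \<le> sqrt (x \<bullet> (P *v x))" using d(2) by simp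
  next
    fix c :: real and x
    have "(c *\<^sub>R x) \<bullet> (P *v (c *\<^sub>R x)) = c^2 * (x \<bullet> (P *v x))"
      by (simp add: matrix_vector_mult_scaleR power2_eq_square)
    then show "sqrt ((c *\<^sub>R x) \<bullet> (P *v (c *\<^sub>R x))) = \<bar>c\<bar> * sqrt (x \<bullet> (P *v x))"
      by (simp add: real_sqrt_mult)
  next
    fix x y
    define a b c where "a = x \<bullet> (P *v x)" "b = x \<bullet> (P *v y)" "c = y \<bullet> (P *v y)"
    have a0: "0 \<le> a" "0 \<le> c" using d(2) a_b_c_def by auto
    have "(x + y) \<bullet> (P *v (x + y)) = a + 2 * b + c"
      using dot_sym[OF d(1), of y x] unfolding a_b_c_def
      by (simp add: matrix_vector_right_distrib inner_add_left inner_add_right)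
    moreover have "b \<le> sqrt a * sqrt c"
    proof -
      have "b^2 \<le> a * c" using psd_cs[OF d(1) d(2)] a_b_c_def by simp
      then have "sqrt (b^2) \<le> sqrt (a * c)" by (rule real_sqrt_le_mono)
      then show ?thesis by (simp add: real_sqrt_mult)
    qed
    ultimately have "(x + y) \<bullet> (P *v (x + y)) \<le> (sqrt a + sqrt c)^2"
      using a0 by (simp add: power2_eq_square algebra_simps)
    then have "sqrt ((x + y) \<bullet> (P *v (x + y))) \<le> sqrt a + sqrt c"
      by (rule real_le_lsqrt[rotated]) (use a0 in simp)
    then show "sqrt ((x + y) \<bullet> (P *v (x + y))) \<le> sqrt (x \<bullet> (P *v x)) + sqrt (y \<bullet> (P *v y))"
      using a_b_c_def by simp
  qed
  show "seminorm_ker (\<lambda>x. sqrt (x \<bullet> (P *v x))) = E"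
    unfolding seminorm_ker_def
  proof safe
    fix x assume "sqrt (x \<bullet> (P *v x)) = 0"
    then have "P *v x = 0" using psd_zero[OF d(1) d(2)] by simp
    then show "x \<in> E" using d(3) by simp
  next
    fix x assume "x \<in> E"
    then show "sqrt (x \<bullet> (P *v x)) = 0" using d(3)[of x] by simp
  qed
qed

lemma quad_equiv:
  assumes "P \<in> psd_ker E"
  shows "\<exists>c C. c > 0 \<and> C > 0 \<and> (\<forall>x. c^2 * (norm (Pm *v x))^2 \<le> x \<bullet> (P *v x) \<and>
            x \<bullet> (P *v x) \<le> C^2 * (norm (Pm *v x))^2)"
proof -
  obtain c C where cC: "c > 0" "C > 0"
    "\<And>x. c * norm (Pm *v x) \<le> sqrt (x \<bullet> (P *v x)) \<and> sqrt (x \<bullet> (P *v x)) \<le> C * norm (Pm *v x)"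
    using seminorm_equiv[OF psd_seminorm[OF assms]] by blast
  have pos: "0 \<le> x \<bullet> (P *v x)" for x using psd_kerD(2)[OF assms] .
  have "c^2 * (norm (Pm *v x))^2 \<le> x \<bullet> (P *v x) \<and> x \<bullet> (P *v x) \<le> C^2 * (norm (Pm *v x))^2" for x
  proof
    have "(c * norm (Pm *v x))^2 \<le> (sqrt (x \<bullet> (P *v x)))^2"
      by (rule power_mono) (use cC in auto)
    then show "c^2 * (norm (Pm *v x))^2 \<le> x \<bullet> (P *v x)" using pos[of x] by (simp add: power_mult_distrib)
    have "(sqrt (x \<bullet> (P *v x)))^2 \<le> (C * norm (Pm *v x))^2"
      by (rule power_mono) (use cC pos in auto)
    then show "x \<bullet> (P *v x) \<le> C^2 * (norm (Pm *v x))^2" using pos[of x] by (simp add: power_mult_distrib)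
  qed
  then show ?thesis using cC(1,2) by blast
qed

lemma Stab_inv: "Stab A Pm \<Longrightarrow> x \<in> E \<Longrightarrow> A *v x \<in> E"
proof -
  assume "Stab A Pm" "x \<in> E"
  then obtain \<alpha> \<beta> where "\<forall>k x. norm (Pm *v orbit A x k) \<le> \<alpha> * norm (Pm *v x) * exp (- \<beta> * real k)"
    unfolding Stab_def by blast
  then have "norm (Pm *v orbit A x 1) \<le> \<alpha> * norm (Pm *v x) * exp (- \<beta>)" by (metis of_nat_1 mult.right_neutral)
  moreover have "Pm *v x = 0" using \<open>x \<in> E\<close> kerP by simp
  ultimately have "Pm *v (A *v x) = 0" by (simp add: orbit_def)
  then show ?thesis using kerP by simp
qed

lemma cond2_Stab: "cond2 A E \<Longrightarrow> Stab A Pm"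
proof -
  assume "cond2 A E"
  then obtain p \<alpha> \<beta> where p: "seminorm p" "seminorm_ker p = E" "\<alpha> > 0" "\<beta> > 0"
    "\<And>k x0. p (orbit A x0 k) \<le> \<alpha> * p x0 * exp (- \<beta> * real k)"
    unfolding cond2_def by blast
  obtain c C where cC: "c > 0" "C > 0" "\<And>x. c * norm (Pm *v x) \<le> p x \<and> p x \<le> C * norm (Pm *v x)"
    using seminorm_equiv[OF p(1,2)] by blast
  have "norm (Pm *v orbit A x k) \<le> (\<alpha> * C / c) * norm (Pm *v x) * exp (- \<beta> * real k)" for k x
  proof -
    define e where "e = exp (- \<beta> * real k)"
    have e0: "e > 0" unfolding e_def by simp
    have "c * norm (Pm *v orbit A x k) \<le> p (orbit A x k)" using cC(3) by blast
    also have "\<dots> \<le> \<alpha> * p x * e" using p(5) e_def by blast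
    also have "\<dots> \<le> \<alpha> * (C * norm (Pm *v x)) * e"
      using cC(3)[of x] p(3) e0 by (intro mult_right_mono mult_left_mono) auto
    finally have "c * norm (Pm *v orbit A x k) \<le> \<alpha> * C * norm (Pm *v x) * e" by (simp add: mult_ac)
    then have "norm (Pm *v orbit A x k) \<le> (\<alpha> * C * norm (Pm *v x) * e) / c"
      using cC(1) by (simp add: pos_le_divide_eq mult.commute)
    then show ?thesis unfolding e_def by (simp add: field_simps)
  qed
  moreover have "\<alpha> * C / c > 0" using p(3) cC by simp
  ultimately show ?thesis unfolding Stab_def using p(4) by blast
qed

lemma Stab_cond3: "Stab A Pm \<Longrightarrow> cond3 A E"
proof -
  assume "Stab A Pm"
  then obtain \<alpha> \<beta> where ab: "\<alpha> > 0" "\<beta> > 0"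
    "\<And>k x. norm (Pm *v orbit A x k) \<le> \<alpha> * norm (Pm *v x) * exp (- \<beta> * real k)"
    unfolding Stab_def by blast
  show "cond3 A E" unfolding cond3_def
  proof (intro allI impI)
    fix p assume "seminorm p \<and> seminorm_ker p = E"
    then have p: "seminorm p" "seminorm_ker p = E" by auto
    obtain c C where cC: "c > 0" "C > 0" "\<And>x. c * norm (Pm *v x) \<le> p x \<and> p x \<le> C * norm (Pm *v x)"
      using seminorm_equiv[OF p] by blast
    have "p (orbit A x k) \<le> (C * \<alpha> / c) * p x * exp (- \<beta> * real k)" for k x
    proof -
      define e where "e = exp (- \<beta> * real k)"
      have e0: "e > 0" unfolding e_def by simp
      have nq: "norm (Pm *v x) \<le> p x / c" using cC(3)[of x] cC(1) by (simp add: pos_le_divide_eq mult.commute)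
      have "p (orbit A x k) \<le> C * norm (Pm *v orbit A x k)" using cC(3) by blast
      also have "\<dots> \<le> C * (\<alpha> * norm (Pm *v x) * e)" using ab(3) cC(2) e_def by (intro mult_left_mono) auto
      also have "\<dots> \<le> C * (\<alpha> * (p x / c) * e)"
        using nq ab(1) cC(2) e0 by (intro mult_left_mono mult_right_mono) auto
      finally show ?thesis unfolding e_def by (simp add: field_simps)
    qed
    moreover have "C * \<alpha> / c > 0" using ab cC by simp
    ultimately show "\<exists>\<alpha> \<beta>. \<alpha> > 0 \<and> \<beta> > 0 \<and> (\<forall>k x0. p (orbit A x0 k) \<le> \<alpha> * p x0 * exp (- \<beta> * real k))"
      using ab(2) by blast
  qed
qed

lemma cond3_cond2: "cond3 A E \<Longrightarrow> cond2 A E"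
  unfolding cond3_def cond2_def using q_seminorm by blast

end

lemma exp_pow: "exp (- \<beta> * real k) = exp (- \<beta>) ^ k"
  by (metis exp_of_nat_mult mult.commute)

lemma zero_by_geom:
  fixes c D r :: real
  assumes "0 \<le> r" "r < 1" "\<And>k. \<bar>c\<bar> \<le> D * r^k"
  shows "c = 0"
proof -
  have "(\<lambda>k. D * r^k) \<longlonglongrightarrow> D * 0"
    by (intro tendsto_mult tendsto_const LIMSEQ_power_zero) (use assms in simp)
  then have "\<bar>c\<bar> \<le> 0" using LIMSEQ_le_const[of "\<lambda>k. D * r^k" 0 "\<bar>c\<bar>"] assms(3) by auto
  then show ?thesis by simp
qed

lemma bl_form: "bounded_linear (\<lambda>M::real^'n^'n. x \<bullet> (M *v y))"
proof (rule bounded_linear_intro[where K = "norm x * real CARD('n) * norm y"])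
  fix M N :: "real^'n^'n"
  show "x \<bullet> ((M + N) *v y) = x \<bullet> (M *v y) + x \<bullet> (N *v y)"
    by (simp add: matrix_vector_mult_add_rdistrib inner_add_right)
next
  fix r and M :: "real^'n^'n"
  show "x \<bullet> ((r *\<^sub>R M) *v y) = r *\<^sub>R (x \<bullet> (M *v y))"
    by (simp add: scaleR_matrix_vector_assoc[symmetric])
next
  fix M :: "real^'n^'n"
  have "norm (x \<bullet> (M *v y)) \<le> norm x * norm (M *v y)" using Cauchy_Schwarz_ineq2 by simp
  also have "\<dots> \<le> norm x * (real CARD('n) * norm M * norm y)" by (rule mult_left_mono[OF norm_mv_le]) simp
  finally show "norm (x \<bullet> (M *v y)) \<le> norm M * (norm x * real CARD('n) * norm y)" by (simp add: mult_ac)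
qed

lemma mono_helper:
  fixes a b s r D :: real
  assumes "0 \<le> a" "0 \<le> b" "0 \<le> s" "s \<le> r"
  shows "D * a * b * s^k \<le> \<bar>D\<bar> * a * b * r^k"
proof -
  have "D * a * b * s^k \<le> \<bar>D\<bar> * a * b * s^k" using assms by (intro mult_right_mono) auto
  also have "\<dots> \<le> \<bar>D\<bar> * a * b * r^k" using assms by (intro mult_left_mono power_mono) auto
  finally show ?thesis .
qed

context projE
begin

lemma cond4_Stab: "cond4 A E \<Longrightarrow> Stab A Pm"
proof -
  assume "cond4 A E"
  then obtain P Q where PQ: "P \<in> psd_ker E" "Q \<in> psd_ker E" "transpose A ** P ** A - P + Q = 0"
    unfolding cond4_def by blast
  obtain cP CP where P: "cP > 0" "CP > 0"
    "\<And>x. cP^2 * (norm (Pm *v x))^2 \<le> x \<bullet> (P *v x) \<and> x \<bullet> (P *v x) \<le> CP^2 * (norm (Pm *v x))^2"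
    using quad_equiv[OF PQ(1)] by blast
  obtain cQ CQ where Q: "cQ > 0" "CQ > 0"
    "\<And>x. cQ^2 * (norm (Pm *v x))^2 \<le> x \<bullet> (Q *v x) \<and> x \<bullet> (Q *v x) \<le> CQ^2 * (norm (Pm *v x))^2"
    using quad_equiv[OF PQ(2)] by blast
  define V where "V x = x \<bullet> (P *v x)" for x
  have V0: "0 \<le> V x" for x using psd_kerD(2)[OF PQ(1)] V_def by simp
  define \<gamma> where "\<gamma> = min (cQ^2 / CP^2) (1/2)"
  have g: "0 < \<gamma>" "\<gamma> \<le> 1/2" "\<gamma> \<le> cQ^2 / CP^2"
  proof -
    show "0 < \<gamma>" unfolding \<gamma>_def using Q(1) P(2) by simp
    show "\<gamma> \<le> 1/2" unfolding \<gamma>_def by (rule min.cobounded2)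
    show "\<gamma> \<le> cQ^2 / CP^2" unfolding \<gamma>_def by (rule min.cobounded1)
  qed
  have step: "V (A *v x) \<le> (1 - \<gamma>) * V x" for x
  proof -
    have e: "V (A *v x) = V x - x \<bullet> (Q *v x)" using form_eqn[OF PQ(3), of x x] V_def by simp
    have "\<gamma> * V x \<le> cQ^2 / CP^2 * V x" using g V0 by (intro mult_right_mono) auto
    also have "\<dots> \<le> cQ^2 / CP^2 * (CP^2 * (norm (Pm *v x))^2)"
      using P(3)[of x] V_def by (intro mult_left_mono) auto
    also have "\<dots> = cQ^2 * (norm (Pm *v x))^2" using P(2) by simp
    also have "\<dots> \<le> x \<bullet> (Q *v x)" using Q(3) by blast
    finally show ?thesis using e by (simp add: algebra_simps)
  qed
  have iter: "V (orbit A x k) \<le> (1 - \<gamma>)^k * V x" for k x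
  proof (induction k)
    case 0 then show ?case by simp
  next
    case (Suc k)
    have "V (orbit A x (Suc k)) \<le> (1 - \<gamma>) * V (orbit A x k)" unfolding orbit_Suc by (rule step)
    also have "\<dots> \<le> (1 - \<gamma>) * ((1 - \<gamma>)^k * V x)" using Suc g by (intro mult_left_mono) auto
    finally show ?case by simp
  qed
  define \<rho> where "\<rho> = sqrt (1 - \<gamma>)"
  have r: "0 < \<rho>" "\<rho> < 1" "\<rho>^2 = 1 - \<gamma>" unfolding \<rho>_def using g by auto
  define \<beta> where "\<beta> = - ln \<rho>"
  have b: "\<beta> > 0" unfolding \<beta>_def using r by simp
  have eb: "exp (- \<beta> * real k) = \<rho>^k" for k unfolding exp_pow \<beta>_def using r by simp
  have "norm (Pm *v orbit A x k) \<le> (CP / cP) * norm (Pm *v x) * exp (- \<beta> * real k)" for k x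
  proof -
    have "cP^2 * (norm (Pm *v orbit A x k))^2 \<le> V (orbit A x k)" using P(3)[of "orbit A x k"] V_def by simp
    also have "\<dots> \<le> (1 - \<gamma>)^k * V x" by (rule iter)
    also have "\<dots> \<le> (1 - \<gamma>)^k * (CP^2 * (norm (Pm *v x))^2)"
      using P(3)[of x] V_def g by (intro mult_left_mono) auto
    also have "\<dots> = cP^2 * ((CP / cP) * norm (Pm *v x) * \<rho>^k)^2"
    proof -
      have "(\<rho>^k)^2 = (1 - \<gamma>)^k" using r(3) by (simp add: power_mult[symmetric] mult.commute[of k] power_mult)
      then show ?thesis using P(1) by (simp add: power_mult_distrib power_divide)
    qed
    finally have "(norm (Pm *v orbit A x k))^2 \<le> ((CP / cP) * norm (Pm *v x) * \<rho>^k)^2"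
      using P(1) by simp
    then have "norm (Pm *v orbit A x k) \<le> (CP / cP) * norm (Pm *v x) * \<rho>^k"
      by (rule power2_le_imp_le) (use P r in simp)
    then show ?thesis using eb by simp
  qed
  moreover have "CP / cP > 0" using P by simp
  ultimately show ?thesis unfolding Stab_def using b by blast
qed

lemma orbit_E: "Stab A Pm \<Longrightarrow> x \<in> E \<Longrightarrow> orbit A x k \<in> E"
  by (induction k) (simp_all add: orbit_Suc Stab_inv)

lemma Stab_bounds:
  assumes "Stab A Pm"
  obtains \<alpha> r where "\<alpha> > 0" "0 \<le> r" "r < 1"
    "\<And>k x. norm (Pm *v orbit A x k) \<le> \<alpha> * norm (Pm *v x) * r^k"
proof -
  obtain \<alpha> \<beta> where ab: "\<alpha> > 0" "\<beta> > 0"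
    "\<And>k x. norm (Pm *v orbit A x k) \<le> \<alpha> * norm (Pm *v x) * exp (- \<beta> * real k)"
    using assms unfolding Stab_def by blast
  show ?thesis
  proof (rule that[of \<alpha> "exp (- \<beta>)"])
    show "norm (Pm *v orbit A x k) \<le> \<alpha> * norm (Pm *v x) * exp (- \<beta>) ^ k" for k x
      using ab(3)[of x k] unfolding exp_pow .
  qed (use ab in auto)
qed

lemma Stab_form_decay:
  assumes st: "Stab A Pm" and P: "P \<in> psd_ker E"
  obtains D r where "0 \<le> r" "r < 1" "\<And>k x y. \<bar>orbit A x k \<bullet> (P *v orbit A y k)\<bar> \<le>
      D * norm (Pm *v x) * norm (Pm *v y) * r^k"
proof -
  obtain \<alpha> r where ar: "\<alpha> > 0" "0 \<le> r" "r < 1"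
    "\<And>k x. norm (Pm *v orbit A x k) \<le> \<alpha> * norm (Pm *v x) * r^k"
    using Stab_bounds[OF st] by blast
  obtain K where K: "K > 0" "\<And>x y. \<bar>x \<bullet> (P *v y)\<bar> \<le> K * norm (Pm *v x) * norm (Pm *v y)"
    using form_bound[OF P] by blast
  have "\<bar>orbit A x k \<bullet> (P *v orbit A y k)\<bar> \<le> (K * \<alpha>^2) * norm (Pm *v x) * norm (Pm *v y) * (r^2)^k" for k x y
  proof -
    have "\<bar>orbit A x k \<bullet> (P *v orbit A y k)\<bar> \<le> K * norm (Pm *v orbit A x k) * norm (Pm *v orbit A y k)"
      by (rule K(2))
    also have "\<dots> \<le> K * (\<alpha> * norm (Pm *v x) * r^k) * (\<alpha> * norm (Pm *v y) * r^k)"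
      using K(1) ar by (intro mult_mono mult_left_mono) auto
    also have "\<dots> = (K * \<alpha>^2) * norm (Pm *v x) * norm (Pm *v y) * (r^2)^k"
      by (simp add: power2_eq_square power_mult_distrib[symmetric] mult_ac)
    finally show ?thesis .
  qed
  moreover have "0 \<le> r^2" "r^2 < 1" using ar by (auto simp: power_less_one_iff abs_square_less_1)
  ultimately show ?thesis using that by blast
qed

lemma Stab_unique:
  assumes st: "Stab A Pm" and P1: "P1 \<in> psd_ker E" and P2: "P2 \<in> psd_ker E"
    and e1: "transpose A ** P1 ** A - P1 + Q = 0" and e2: "transpose A ** P2 ** A - P2 + Q = 0"
  shows "P1 = P2"
proof (rule forms_eq)
  fix x y :: "real^'n"
  define d where "d u v = u \<bullet> (P1 *v v) - u \<bullet> (P2 *v v)" for u v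
  have dA: "d (A *v u) (A *v v) = d u v" for u v
    using form_eqn[OF e1, of u v] form_eqn[OF e2, of u v] d_def by simp
  have dk: "d (orbit A x k) (orbit A y k) = d x y" for k
    by (induction k) (simp_all add: orbit_Suc dA)
  obtain D1 r1 where R1: "0 \<le> r1" "r1 < 1" "\<And>k x y. \<bar>orbit A x k \<bullet> (P1 *v orbit A y k)\<bar> \<le>
      D1 * norm (Pm *v x) * norm (Pm *v y) * r1^k" using Stab_form_decay[OF st P1] by metis
  obtain D2 r2 where R2: "0 \<le> r2" "r2 < 1" "\<And>k x y. \<bar>orbit A x k \<bullet> (P2 *v orbit A y k)\<bar> \<le>
      D2 * norm (Pm *v x) * norm (Pm *v y) * r2^k" using Stab_form_decay[OF st P2] by metis
  define r where "r = max r1 r2"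
  define D where "D = \<bar>D1\<bar> * norm (Pm *v x) * norm (Pm *v y) + \<bar>D2\<bar> * norm (Pm *v x) * norm (Pm *v y)"
  have "\<bar>d x y\<bar> \<le> D * r^k" for k
  proof -
    have "\<bar>d x y\<bar> = \<bar>orbit A x k \<bullet> (P1 *v orbit A y k) - orbit A x k \<bullet> (P2 *v orbit A y k)\<bar>"
      using dk[of k] unfolding d_def by simp
    also have "\<dots> \<le> \<bar>orbit A x k \<bullet> (P1 *v orbit A y k)\<bar> + \<bar>orbit A x k \<bullet> (P2 *v orbit A y k)\<bar>"
      by (rule abs_triangle_ineq4)
    also have "\<dots> \<le> D1 * norm (Pm *v x) * norm (Pm *v y) * r1^k + D2 * norm (Pm *v x) * norm (Pm *v y) * r2^k"
      using R1(3) R2(3) by (rule add_mono)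
    also have "\<dots> \<le> \<bar>D1\<bar> * norm (Pm *v x) * norm (Pm *v y) * r^k + \<bar>D2\<bar> * norm (Pm *v x) * norm (Pm *v y) * r^k"
      unfolding r_def using R1(1) R2(1)
      by (intro add_mono mono_helper) auto
    also have "\<dots> = D * r^k" unfolding D_def by (simp add: algebra_simps)
    finally show ?thesis .
  qed
  then have "d x y = 0" by (rule zero_by_geom[rotated 2]) (use R1 R2 r_def in auto)
  then show "x \<bullet> (P1 *v y) = x \<bullet> (P2 *v y)" unfolding d_def by simp
qed

end

context projE
begin

lemma Stab_exists:
  assumes st: "Stab A Pm" and Q: "Q \<in> psd_ker E"
  shows "\<exists>P. P \<in> psd_ker E \<and> transpose A ** P ** A - P + Q = 0"
proof -
  note dQ = psd_kerD[OF Q]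
  obtain D r where Dr: "0 \<le> r" "r < 1" "\<And>k x y. \<bar>orbit A x k \<bullet> (Q *v orbit A y k)\<bar> \<le>
      D * norm (Pm *v x) * norm (Pm *v y) * r^k" using Stab_form_decay[OF st Q] by metis
  define M where "M k = transpose (mpow A k) ** Q ** mpow A k" for k
  define b where "b k x y = orbit A x k \<bullet> (Q *v orbit A y k)" for k x y
  have Mb: "x \<bullet> (M k *v y) = b k x y" for k x y
    unfolding M_def b_def form_AtPA orbit_mpow ..
  define DD where "DD = (\<Sum>i\<in>(UNIV::'n set). \<Sum>j\<in>(UNIV::'n set).
      \<bar>D\<bar> * norm (Pm *v axis i 1) * norm (Pm *v (axis j (1::real))))"
  have normM: "norm (M k) \<le> DD * r^k" for k
  proof -
    have "norm (M k) \<le> (\<Sum>i\<in>UNIV. norm (M k $ i))" by (rule norm_le_sum_norm_cart)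
    also have "\<dots> \<le> (\<Sum>i\<in>UNIV. \<Sum>j\<in>UNIV. \<bar>M k $ i $ j\<bar>)"
      by (rule sum_mono) (rule norm_le_l1_cart)
    also have "\<dots> \<le> (\<Sum>i\<in>(UNIV::'n set). \<Sum>j\<in>(UNIV::'n set).
        \<bar>D\<bar> * norm (Pm *v axis i 1) * norm (Pm *v (axis j (1::real))) * r^k)"
    proof (intro sum_mono)
      fix i j
      have "\<bar>M k $ i $ j\<bar> = \<bar>b k (axis i 1) (axis j 1)\<bar>" using Mb[of "axis i 1" k "axis j 1"]
        by (simp add: inner_axis_mv)
      also have "\<dots> \<le> D * norm (Pm *v axis i 1) * norm (Pm *v axis j 1) * r^k"
        unfolding b_def by (rule Dr(3))
      also have "\<dots> \<le> \<bar>D\<bar> * norm (Pm *v axis i 1) * norm (Pm *v axis j 1) * r^k"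
        by (rule mono_helper) (use Dr in auto)
      finally show "\<bar>M k $ i $ j\<bar> \<le> \<bar>D\<bar> * norm (Pm *v axis i 1) * norm (Pm *v axis j 1) * r^k" .
    qed
    also have "\<dots> = DD * r^k" unfolding DD_def by (simp add: sum_distrib_right)
    finally show ?thesis .
  qed
  have sumM: "summable M"
  proof (rule summable_comparison_test)
    show "\<exists>N. \<forall>n\<ge>N. norm (M n) \<le> DD * r^n" using normM by blast
    show "summable (\<lambda>n. DD * r^n)" by (rule summable_mult, rule summable_geometric) (use Dr in simp)
  qed
  define P where "P = suminf M"
  have sumb: "summable (\<lambda>k. b k x y)" for x y
    using bounded_linear.summable[OF bl_form[of x y] sumM] Mb by simp
  have Pb: "x \<bullet> (P *v y) = (\<Sum>k. b k x y)" for x y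
    using bounded_linear.suminf[OF bl_form[of x y] sumM] Mb unfolding P_def by simp
  have bsym: "b k x y = b k y x" for k x y unfolding b_def using dot_sym[OF dQ(1)] by simp
  have bpos: "0 \<le> b k x x" for k x unfolding b_def using dQ(2) by simp
  have b0: "b 0 x y = x \<bullet> (Q *v y)" for x y unfolding b_def by simp
  have bA: "b k (A *v x) (A *v y) = b (Suc k) x y" for k x y unfolding b_def orbit_Suc' ..
  have eq: "transpose A ** P ** A - P + Q = 0"
  proof (rule forms_eq)
    fix x y :: "real^'n"
    have "x \<bullet> ((transpose A ** P ** A) *v y) = (\<Sum>k. b (Suc k) x y)"
      unfolding form_AtPA Pb bA ..
    also have "\<dots> = (\<Sum>k. b k x y) - b 0 x y" by (rule suminf_split_head[OF sumb])
    finally have "x \<bullet> ((transpose A ** P ** A) *v y) = x \<bullet> (P *v y) - x \<bullet> (Q *v y)"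
      unfolding Pb b0 .
    then show "x \<bullet> ((transpose A ** P ** A - P + Q) *v y) = x \<bullet> (0 *v y)"
      by (simp add: matrix_vector_mult_add_rdistrib matrix_vector_mult_diff_rdistrib inner_add_right inner_diff_right)
  qed
  have symP: "transpose P = P"
  proof (rule forms_eq)
    fix x y :: "real^'n"
    have "x \<bullet> (transpose P *v y) = y \<bullet> (P *v x)" by (simp only: dot_transpose inner_commute)
    also have "\<dots> = x \<bullet> (P *v y)" unfolding Pb using bsym by simp
    finally show "x \<bullet> (transpose P *v y) = x \<bullet> (P *v y)" .
  qed
  have posP: "0 \<le> x \<bullet> (P *v x)" for x unfolding Pb by (rule suminf_nonneg[OF sumb bpos])
  have kerP': "P *v x = 0 \<longleftrightarrow> x \<in> E" for x
  proof
    assume "P *v x = 0"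
    then have "(\<Sum>k. b k x x) = 0" using Pb[of x x] by simp
    moreover have "sum (\<lambda>k. b k x x) {0} \<le> (\<Sum>k. b k x x)"
      by (rule sum_le_suminf[OF sumb]) (use bpos in auto)
    ultimately have "x \<bullet> (Q *v x) \<le> 0" using b0 by simp
    then have "x \<bullet> (Q *v x) = 0" using dQ(2)[of x] by simp
    then have "Q *v x = 0" by (rule psd_zero[OF dQ(1) dQ(2)])
    then show "x \<in> E" using dQ(3) by simp
  next
    assume xE: "x \<in> E"
    have "b k y x = 0" for k y
    proof -
      have "orbit A x k \<in> E" by (rule orbit_E[OF st xE])
      then have "Q *v orbit A x k = 0" using dQ(3) by simp
      then show ?thesis unfolding b_def by simp
    qed
    then have "(P *v x) \<bullet> (P *v x) = 0" using Pb[of "P *v x" x] by simp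
    then show "P *v x = 0" by simp
  qed
  have "P \<in> psd_ker E" unfolding psd_ker_def using symP posP kerP' by auto
  then show ?thesis using eq by blast
qed

lemma Stab_cond5: "Stab A Pm \<Longrightarrow> cond5 A E"
  unfolding cond5_def
proof (intro ballI ex_ex1I)
  fix Q assume st: "Stab A Pm" and Q: "Q \<in> psd_ker E"
  show "\<exists>P. P \<in> psd_ker E \<and> transpose A ** P ** A - P + Q = 0" by (rule Stab_exists[OF st Q])
  fix P1 P2
  assume "P1 \<in> psd_ker E \<and> transpose A ** P1 ** A - P1 + Q = 0"
    and "P2 \<in> psd_ker E \<and> transpose A ** P2 ** A - P2 + Q = 0"
  then show "P1 = P2" using Stab_unique[OF st] by blast
qed

lemma Pm_psd: "Pm \<in> psd_ker E"
proof -
  have "x \<bullet> (Pm *v x) = (Pm *v x) \<bullet> (Pm *v x)" for x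
  proof -
    have "x \<bullet> (Pm *v x) = x \<bullet> (transpose Pm *v (Pm *v x))" using symP idemP by simp
    also have "\<dots> = (Pm *v x) \<bullet> (Pm *v x)" by (rule dot_transpose)
    finally show ?thesis .
  qed
  then have "0 \<le> x \<bullet> (Pm *v x)" for x by simp
  then show ?thesis unfolding psd_ker_def using symP kerP by auto
qed

lemma cond5_cond4: "cond5 A E \<Longrightarrow> cond4 A E"
  unfolding cond5_def cond4_def using Pm_psd by blast

end

definition re_v :: "complex^'n \<Rightarrow> real^'n" where "re_v z = (\<chi> i. Re (z $ i))"
definition im_v :: "complex^'n \<Rightarrow> real^'n" where "im_v z = (\<chi> i. Im (z $ i))"
definition conjv :: "complex^'n \<Rightarrow> complex^'n" where "conjv z = (\<chi> i. cnj (z $ i))"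

lemma cvec_nth[simp]: "cvec x $ i = complex_of_real (x $ i)" by (simp add: cvec_def)
lemma cmat_nth[simp]: "cmat M $ i $ j = complex_of_real (M $ i $ j)" by (simp add: cmat_def)
lemma re_v_nth[simp]: "re_v z $ i = Re (z $ i)" by (simp add: re_v_def)
lemma im_v_nth[simp]: "im_v z $ i = Im (z $ i)" by (simp add: im_v_def)
lemma conjv_nth[simp]: "conjv z $ i = cnj (z $ i)" by (simp add: conjv_def)

lemma cvec_add: "cvec (x + y) = cvec x + cvec y" by (simp add: vec_eq_iff)
lemma cvec_0[simp]: "cvec 0 = 0" by (simp add: vec_eq_iff)
lemma cvec_scale: "cvec (c *\<^sub>R x) = complex_of_real c *s cvec x" by (simp add: vec_eq_iff)
lemma re_cvec[simp]: "re_v (cvec x) = x" by (simp add: vec_eq_iff)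
lemma im_cvec[simp]: "im_v (cvec x) = 0" by (simp add: vec_eq_iff)

lemma re_v_add: "re_v (z + w) = re_v z + re_v w" by (simp add: vec_eq_iff)
lemma im_v_add: "im_v (z + w) = im_v z + im_v w" by (simp add: vec_eq_iff)
lemma re_v_0[simp]: "re_v 0 = 0" by (simp add: vec_eq_iff)
lemma im_v_0[simp]: "im_v 0 = 0" by (simp add: vec_eq_iff)
lemma re_v_scale: "re_v (c *s z) = Re c *\<^sub>R re_v z - Im c *\<^sub>R im_v z" by (simp add: vec_eq_iff)
lemma im_v_scale: "im_v (c *s z) = Re c *\<^sub>R im_v z + Im c *\<^sub>R re_v z" by (simp add: vec_eq_iff)

lemma re_v_mv: "re_v (cmat M *v z) = M *v re_v z"
  by (simp add: vec_eq_iff matrix_vector_mult_def Re_sum)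
lemma im_v_mv: "im_v (cmat M *v z) = M *v im_v z"
  by (simp add: vec_eq_iff matrix_vector_mult_def Im_sum)
lemma cmat_cvec: "cmat M *v cvec x = cvec (M *v x)"
  by (simp add: vec_eq_iff matrix_vector_mult_def)

lemma vec_zero_re_im: "z = 0 \<longleftrightarrow> re_v z = 0 \<and> im_v z = 0"
  by (auto simp: vec_eq_iff complex_eq_iff)

lemma norm_sq_vec: "(norm x)^2 = (\<Sum>i\<in>UNIV. (norm (x $ i))^2)" for x :: "'a::real_normed_vector^'n"
  unfolding norm_vec_def L2_set_def by (simp add: sum_nonneg)

lemma norm_re_im: "(norm z)^2 = (norm (re_v z))^2 + (norm (im_v z))^2"
  unfolding norm_sq_vec by (simp add: cmod_power2 sum.distrib)

lemma norm_re_le: "norm (re_v z) \<le> norm z"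
  using norm_re_im[of z] by (metis abs_norm_cancel le_add_same_cancel1 real_sqrt_abs real_sqrt_le_mono zero_le_power2)

lemma norm_im_le: "norm (im_v z) \<le> norm z"
  using norm_re_im[of z] by (metis abs_norm_cancel le_add_same_cancel2 real_sqrt_abs real_sqrt_le_mono zero_le_power2)

lemma norm_le_re_im: "norm z \<le> norm (re_v z) + norm (im_v z)"
proof (rule power2_le_imp_le)
  show "(norm z)^2 \<le> (norm (re_v z) + norm (im_v z))^2"
    unfolding norm_re_im by (simp add: power2_sum)
qed simp

lemma norm_smult_c: "norm (c *s z) = cmod c * norm z" for z :: "complex^'n"
  unfolding norm_vec_def by (simp add: norm_mult L2_set_right_distrib)

lemma cvec_re_conj: "cvec (re_v z) = (1/2) *s (z + conjv z)"
  by (simp add: vec_eq_iff complex_eq_iff)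

lemma conjv_mv: "conjv (cmat M *v z) = cmat M *v conjv z"
  by (simp add: vec_eq_iff matrix_vector_mult_def)
lemma conjv_add: "conjv (a + b) = conjv a + conjv b" by (simp add: vec_eq_iff)
lemma conjv_0[simp]: "conjv 0 = 0" by (simp add: vec_eq_iff)
lemma conjv_scale: "conjv (c *s z) = cnj c *s conjv z" by (simp add: vec_eq_iff)
lemma conjv_conjv[simp]: "conjv (conjv z) = z" by (simp add: vec_eq_iff)
lemma conjv_eq0[simp]: "conjv z = 0 \<longleftrightarrow> z = 0" by (metis conjv_0 conjv_conjv)

definition corb :: "real^'n^'n \<Rightarrow> complex^'n \<Rightarrow> nat \<Rightarrow> complex^'n" where
  "corb A z k = (((*v) (cmat A)) ^^ k) z"

abbreviation NA :: "real^'n^'n \<Rightarrow> complex \<Rightarrow> complex^'n^'n" where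
  "NA A l \<equiv> cmat A - (\<chi> i j. if i = j then l else 0)"

abbreviation Gset :: "real^'n^'n \<Rightarrow> (complex^'n) set" where
  "Gset A \<equiv> {v. \<exists>l. cmod l \<ge> 1 \<and> gen_eigenvector A l v}"

lemma corb_0[simp]: "corb A z 0 = z" by (simp add: corb_def)
lemma corb_Suc: "corb A z (Suc k) = cmat A *v corb A z k" by (simp add: corb_def)
lemma corb_Suc': "corb A z (Suc k) = corb A (cmat A *v z) k"
  by (simp add: corb_def funpow_Suc_right del: funpow.simps)
lemma corb_add: "corb A (z + w) k = corb A z k + corb A w k"
  by (induction k) (simp_all add: corb_Suc matrix_vector_right_distrib)
lemma corb_scale: "corb A (c *s z) k = c *s corb A z k"
  by (induction k) (simp_all add: corb_Suc vector_scalar_commute)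
lemma corb_zero[simp]: "corb A 0 k = 0"
  by (induction k) (simp_all add: corb_Suc)
lemma re_corb: "re_v (corb A z k) = orbit A (re_v z) k"
  by (induction k) (simp_all add: corb_Suc orbit_Suc re_v_mv)
lemma im_corb: "im_v (corb A z k) = orbit A (im_v z) k"
  by (induction k) (simp_all add: corb_Suc orbit_Suc im_v_mv)

lemma diagl_mv: "(\<chi> i j. if i = j then l else 0) *v w = l *s w" for w :: "complex^'n"
proof -
  have "(\<Sum>j\<in>UNIV. (if i = j then l else 0) * w $ j) = l * w $ i" for i
    by (simp add: if_distrib[of "\<lambda>a. a * _"] cong: if_cong)
  then show ?thesis by (simp add: vec_eq_iff matrix_vector_mult_def)
qed

lemma NA_apply: "NA A l *v w = cmat A *v w - l *s w"
  by (simp add: matrix_vector_mult_diff_rdistrib diagl_mv)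

lemma Ege1_subspace: "subspace (E_ge1 A)"
  unfolding subspace_def E_ge1_def
  by (auto simp: cvec_add cvec_scale vec.span_zero vec.span_add vec.span_scale)

lemma span_G_inv:
  assumes "z \<in> vec.span (Gset A)"
  shows "cmat A *v z \<in> vec.span (Gset A)"
proof -
  have "z \<in> {z. cmat A *v z \<in> vec.span (Gset A)}"
  using assms
proof (rule vec.span_subspace_induct)
  show "vec.subspace {z. cmat A *v z \<in> vec.span (Gset A)}"
    unfolding vec.subspace_def
    by (auto simp: matrix_vector_right_distrib vector_scalar_commute vec.span_zero vec.span_add vec.span_scale)
next
  fix v assume "v \<in> Gset A"
  then obtain l where l: "cmod l \<ge> 1" "gen_eigenvector A l v" by blast
  then obtain k where k: "((*v) (NA A l) ^^ k) v = 0" unfolding gen_eigenvector_def by blast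
  have "NA A l *v v \<in> vec.span (Gset A)"
  proof (cases "NA A l *v v = 0")
    case True then show ?thesis by (simp add: vec.span_zero)
  next
    case False
    have "((*v) (NA A l) ^^ k) (NA A l *v v) = NA A l *v (((*v) (NA A l) ^^ k) v)"
      by (simp add: funpow_swap1)
    also have "\<dots> = 0" using k by simp
    finally have "gen_eigenvector A l (NA A l *v v)" using False unfolding gen_eigenvector_def by blast
    then show ?thesis using l(1) by (intro vec.span_base) blast
  qed
  moreover have "v \<in> vec.span (Gset A)" using l by (intro vec.span_base) blast
  moreover have "cmat A *v v = l *s v + NA A l *v v" using NA_apply[of A l v] by simp
  ultimately show "v \<in> {z. cmat A *v z \<in> vec.span (Gset A)}"
    by (simp add: vec.span_add vec.span_scale)
qed
  then show ?thesis by simp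
qed

lemma Ege1_inv: "x \<in> E_ge1 A \<Longrightarrow> A *v x \<in> E_ge1 A"
  unfolding E_ge1_def using span_G_inv by (simp add: cmat_cvec[symmetric])

context projE
begin

definition EC :: "(complex^'n) set" where "EC = {z. re_v z \<in> E \<and> im_v z \<in> E}"

lemma EC_subspace: "vec.subspace EC"
  unfolding vec.subspace_def EC_def using subE
  by (auto simp: re_v_add im_v_add re_v_scale im_v_scale subspace_0 subspace_add subspace_diff subspace_scale)

lemma EC_iff: "z \<in> EC \<longleftrightarrow> cmat Pm *v z = 0"
  unfolding EC_def by (simp add: vec_zero_re_im[of "cmat Pm *v z"] re_v_mv im_v_mv kerP)

lemma corb_EC: "Stab A Pm \<Longrightarrow> z \<in> EC \<Longrightarrow> corb A z k \<in> EC"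
  unfolding EC_def by (simp add: re_corb im_corb orbit_E)

lemma key_EC:
  assumes st: "Stab A Pm" and l: "1 \<le> cmod l" and e: "NA A l *v w \<in> EC"
  shows "w \<in> EC"
proof -
  define e where "e = NA A l *v w"
  have Aw: "cmat A *v w = l *s w + e" unfolding e_def NA_apply by simp
  have pe: "cmat Pm *v corb A e k = 0" for k using corb_EC[OF st, of e k] e e_def EC_iff by simp
  have pow: "cmat Pm *v corb A w k = l^k *s (cmat Pm *v w)" for k
  proof (induction k)
    case 0 then show ?case by simp
  next
    case (Suc k)
    have "cmat Pm *v corb A w (Suc k) = cmat Pm *v (l *s corb A w k + corb A e k)"
      unfolding corb_Suc' Aw corb_add corb_scale ..
    also have "\<dots> = l *s (cmat Pm *v corb A w k)"
      using pe by (simp add: matrix_vector_right_distrib vector_scalar_commute)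
    also have "\<dots> = l^Suc k *s (cmat Pm *v w)" using Suc by (simp add: vector_smult_assoc)
    finally show ?case .
  qed
  obtain \<alpha> r where ar: "\<alpha> > 0" "0 \<le> r" "r < 1"
    "\<And>k x. norm (Pm *v orbit A x k) \<le> \<alpha> * norm (Pm *v x) * r^k"
    using Stab_bounds[OF st] by blast
  have "\<bar>norm (cmat Pm *v w)\<bar> \<le> (\<alpha> * norm (Pm *v re_v w) + \<alpha> * norm (Pm *v im_v w)) * r^k" for k
  proof -
    have "norm (cmat Pm *v w) \<le> cmod l ^ k * norm (cmat Pm *v w)"
      using l by (simp add: mult_le_cancel_right1 one_le_power)
    also have "\<dots> = norm (cmat Pm *v corb A w k)" unfolding pow norm_smult_c by (simp add: norm_power)
    also have "\<dots> \<le> norm (re_v (cmat Pm *v corb A w k)) + norm (im_v (cmat Pm *v corb A w k))"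
      by (rule norm_le_re_im)
    also have "\<dots> = norm (Pm *v orbit A (re_v w) k) + norm (Pm *v orbit A (im_v w) k)"
      by (simp add: re_v_mv im_v_mv re_corb im_corb)
    also have "\<dots> \<le> \<alpha> * norm (Pm *v re_v w) * r^k + \<alpha> * norm (Pm *v im_v w) * r^k"
      by (intro add_mono ar(4))
    finally show ?thesis by (simp add: algebra_simps)
  qed
  then have "norm (cmat Pm *v w) = 0" by (rule zero_by_geom[rotated 2]) (use ar in auto)
  then show ?thesis using EC_iff by simp
qed

lemma nil_EC:
  assumes st: "Stab A Pm" and l: "1 \<le> cmod l"
  shows "(((*v) (NA A l)) ^^ m) w \<in> EC \<Longrightarrow> w \<in> EC"
proof (induction m arbitrary: w)
  case 0 then show ?case by simp
next
  case (Suc m)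
  then have "NA A l *v w \<in> EC" by (simp add: funpow_Suc_right del: funpow.simps)
  then show ?case by (rule key_EC[OF st l])
qed

lemma Stab_Ege1: "Stab A Pm \<Longrightarrow> E_ge1 A \<subseteq> E"
proof
  fix x assume st: "Stab A Pm" and "x \<in> E_ge1 A"
  then have "cvec x \<in> vec.span (Gset A)" unfolding E_ge1_def by simp
  then have "cvec x \<in> EC"
  proof (rule vec.span_subspace_induct)
    show "vec.subspace EC" by (rule EC_subspace)
    fix v assume "v \<in> Gset A"
    then obtain l k where "1 \<le> cmod l" "((*v) (NA A l) ^^ k) v = 0"
      unfolding gen_eigenvector_def by blast
    moreover have "0 \<in> EC" using EC_subspace unfolding vec.subspace_def by blast
    ultimately show "v \<in> EC" using nil_EC[OF st] by metis
  qed
  then show "x \<in> E" unfolding EC_def by simp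
qed

end

definition papp :: "real^'n^'n \<Rightarrow> complex poly \<Rightarrow> complex^'n \<Rightarrow> complex^'n" where
  "papp A p v = (\<Sum>i\<le>degree p. coeff p i *s corb A v i)"

lemma papp_upto:
  assumes "degree p \<le> n"
  shows "papp A p v = (\<Sum>i\<le>n. coeff p i *s corb A v i)"
  unfolding papp_def
  by (rule sum.mono_neutral_left) (use assms in \<open>auto simp: coeff_eq_0\<close>)

lemma papp_add: "papp A (p + q) v = papp A p v + papp A q v"
proof -
  define n where "n = max (degree p) (degree q)"
  have "papp A (p + q) v = (\<Sum>i\<le>n. coeff (p + q) i *s corb A v i)"
    by (rule papp_upto) (simp add: n_def degree_add_le)
  also have "\<dots> = (\<Sum>i\<le>n. coeff p i *s corb A v i) + (\<Sum>i\<le>n. coeff q i *s corb A v i)"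
    by (simp add: vector_sadd_rdistrib sum.distrib)
  also have "\<dots> = papp A p v + papp A q v"
    using papp_upto[where p=p and n=n and A=A and v=v] papp_upto[where p=q and n=n and A=A and v=v]
    by (simp add: n_def)
  finally show ?thesis .
qed

lemma papp_smult: "papp A (smult c p) v = c *s papp A p v"
proof -
  have "papp A (smult c p) v = (\<Sum>i\<le>degree p. coeff (smult c p) i *s corb A v i)"
    by (rule papp_upto) (rule degree_smult_le)
  then show ?thesis by (simp add: papp_def vec.scale_sum_right vector_smult_assoc)
qed

lemma papp_zero[simp]: "papp A 0 v = 0" by (simp add: papp_def)

lemma papp_pCons: "papp A (pCons a p) v = a *s v + cmat A *v papp A p v"
proof -
  have "papp A (pCons a p) v = (\<Sum>i\<le>Suc (degree p). coeff (pCons a p) i *s corb A v i)"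
    by (rule papp_upto) (rule degree_pCons_le)
  also have "\<dots> = (\<Sum>i\<le>degree p. coeff p i *s corb A v (Suc i)) + a *s v"
    by (subst sum.atMost_Suc_shift) simp
  also have "(\<Sum>i\<le>degree p. coeff p i *s corb A v (Suc i)) = cmat A *v papp A p v"
    by (simp add: papp_def corb_Suc vec.sum vector_scalar_commute)
  finally show ?thesis by simp
qed

lemma papp_mult: "papp A (p * q) v = papp A p (papp A q v)"
proof (induction p rule: pCons_induct)
  case 0 then show ?case by simp
next
  case (pCons a p)
  have "papp A (pCons a p * q) v = papp A (smult a q + pCons 0 (p * q)) v" by simp
  also have "\<dots> = a *s papp A q v + cmat A *v papp A p (papp A q v)"
    by (simp add: papp_add papp_smult papp_pCons pCons.IH)
  also have "\<dots> = papp A (pCons a p) (papp A q v)" by (simp add: papp_pCons)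
  finally show ?case .
qed

lemma papp_const: "papp A [:c:] v = c *s v"
  by (simp add: papp_def)

lemma papp_1: "papp A 1 v = v"
  using papp_const[of A 1 v] by (simp add: one_pCons)

lemma papp_zero_v[simp]: "papp A p 0 = 0"
  by (simp add: papp_def)

lemma papp_lin: "papp A [:-l, 1:] v = NA A l *v v"
  by (simp add: papp_pCons papp_const NA_apply)

lemma papp_pow_lin: "papp A ([:-l, 1:] ^ m) v = (((*v) (NA A l)) ^^ m) v"
proof (induction m)
  case 0 then show ?case by (simp add: papp_1)
next
  case (Suc m)
  have "papp A ([:-l, 1:] ^ Suc m) v = papp A [:-l, 1:] (papp A ([:-l, 1:] ^ m) v)"
    by (simp only: power_Suc papp_mult)
  then show ?case by (simp add: papp_lin Suc.IH)
qed

lemma papp_monom: "papp A (monom c i) v = c *s corb A v i"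
proof -
  have "papp A (monom c i) v = (\<Sum>k\<le>i. coeff (monom c i) k *s corb A v k)"
    by (rule papp_upto) (rule degree_monom_le)
  also have "\<dots> = c *s corb A v i" by (simp add: coeff_monom if_distrib[of "\<lambda>a. a *s _"] cong: if_cong)
  finally show ?thesis .
qed

lemma papp_sum: "papp A (sum f S) v = (\<Sum>i\<in>S. papp A (f i) v)"
  by (induction S rule: infinite_finite_induct) (simp_all add: papp_add)

lemma ann_exists: "\<exists>p. p \<noteq> 0 \<and> papp A p v = 0" for A :: "real^'n^'n"
proof -
  define n where "n = CARD('n)"
  define f where "f i = corb A v i" for i
  show ?thesis
  proof (cases "inj_on f {..n}")
    case False
    then obtain i j where ij: "i \<noteq> j" "f i = f j" unfolding inj_on_def by blast
    define p :: "complex poly" where "p = monom 1 i + smult (-1) (monom 1 j)"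
    have "coeff p i = 1" unfolding p_def using ij(1) by simp
    have "p \<noteq> 0"
    proof
      assume "p = 0"
      then have "coeff p i = 0" by simp
      with \<open>coeff p i = 1\<close> show False by simp
    qed
    moreover have "papp A p v = 0" unfolding p_def papp_add papp_smult papp_monom
      using ij(2) f_def by (simp add: vector_sneg_minus1[symmetric])
    ultimately show ?thesis by blast
  next
    case True
    define S where "S = f ` {..n}"
    have cS: "card S = Suc n" unfolding S_def using True by (simp add: card_image)
    have "vec.dependent S"
    proof (rule vec.dependent_biggerset_general)
      have "vec.dim S \<le> n" unfolding n_def by (rule dim_subset_UNIV_cart_gen)
      then show "vec.dim S < card S" using cS by simp
    qed
    then obtain T U where TU: "finite T" "T \<subseteq> S" "(\<Sum>w\<in>T. U w *s w) = 0" "\<exists>w\<in>T. U w \<noteq> 0"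
      unfolding vec.dependent_explicit by blast
    define c where "c i = (if f i \<in> T then U (f i) else 0)" for i
    define p :: "complex poly" where "p = (\<Sum>i\<le>n. monom (c i) i)"
    have "papp A p v = (\<Sum>i\<le>n. c i *s f i)" unfolding p_def papp_sum papp_monom f_def ..
    also have "\<dots> = (\<Sum>i\<in>{i\<in>{..n}. f i \<in> T}. U (f i) *s f i)"
      by (subst sum.inter_filter[OF finite_atMost]) (simp add: c_def if_distrib[of "\<lambda>a. a *s _"] cong: if_cong)
    also have "\<dots> = (\<Sum>w\<in>f ` {i\<in>{..n}. f i \<in> T}. U w *s w)"
      by (rule sum.reindex[symmetric, unfolded comp_def]) (rule inj_on_subset[OF True], auto)
    also have "f ` {i\<in>{..n}. f i \<in> T} = T" using TU(2) unfolding S_def by auto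
    finally have "papp A p v = 0" using TU(3) by simp
    moreover have "p \<noteq> 0"
    proof -
      obtain w where w: "w \<in> T" "U w \<noteq> 0" using TU(4) by blast
      then obtain i where i: "i \<le> n" "w = f i" using TU(2) unfolding S_def by auto
      have "coeff p i = c i" unfolding p_def by (simp add: coeff_sum coeff_monom i(1))
      also have "\<dots> \<noteq> 0" unfolding c_def using w i by simp
      finally show ?thesis by auto
    qed
    ultimately show ?thesis by blast
  qed
qed

lemma rec_decay:
  fixes s t :: "nat \<Rightarrow> real" and r :: real
  assumes r: "0 \<le> r" "r < 1" and s0: "\<And>k. 0 \<le> s k"
    and rec: "\<And>k. s (Suc k) \<le> r * s k + t k" and t: "t \<longlonglongrightarrow> 0"
  shows "s \<longlonglongrightarrow> 0"
proof (rule LIMSEQ_I)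
  fix \<epsilon> :: real assume \<epsilon>: "0 < \<epsilon>"
  define \<delta> where "\<delta> = \<epsilon> * (1 - r) / 2"
  have \<delta>: "\<delta> > 0" using \<epsilon> r by (simp add: \<delta>_def)
  obtain N where N: "\<And>k. k \<ge> N \<Longrightarrow> norm (t k - 0) < \<delta>" using LIMSEQ_D[OF t \<delta>] by blast
  have cl: "s (N + j) \<le> \<epsilon>/2 + r^j * s N" for j
  proof (induction j)
    case 0 show ?case using \<epsilon> by simp
  next
    case (Suc j)
    have "s (N + Suc j) \<le> r * s (N + j) + t (N + j)" using rec[of "N+j"] by simp
    also have "\<dots> \<le> r * (\<epsilon>/2 + r^j * s N) + \<delta>"
      using Suc r N[of "N+j"] by (intro add_mono mult_left_mono) auto
    also have "\<dots> = \<epsilon>/2 + r^Suc j * s N" by (simp add: \<delta>_def field_simps)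
    finally show ?case .
  qed
  have "(\<lambda>j. r^j * s N) \<longlonglongrightarrow> 0 * s N"
    by (intro tendsto_mult LIMSEQ_power_zero tendsto_const) (use r in simp)
  then obtain J where J: "\<And>j. j \<ge> J \<Longrightarrow> norm (r^j * s N - 0) < \<epsilon>/2"
    using LIMSEQ_D[of "\<lambda>j. r^j * s N" 0 "\<epsilon>/2"] \<epsilon> by auto
  have "norm (s n - 0) < \<epsilon>" if "n \<ge> N + J" for n
  proof -
    define j where "j = n - N"
    have j: "n = N + j" "j \<ge> J" using that unfolding j_def by auto
    have "s n \<le> \<epsilon>/2 + r^j * s N" using cl j by simp
    also have "\<dots> < \<epsilon>" using J[OF j(2)] by simp
    finally show ?thesis using s0[of n] by simp
  qed
  then show "\<exists>no. \<forall>n\<ge>no. norm (s n - 0) < \<epsilon>" by blast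
qed

lemma nil_decay:
  assumes l: "cmod l < 1"
  shows "(((*v) (NA A l)) ^^ m) w = 0 \<Longrightarrow> (\<lambda>k. corb A w k) \<longlonglongrightarrow> 0"
proof (induction m arbitrary: w)
  case 0 then show ?case by simp
next
  case (Suc m)
  define u where "u = NA A l *v w"
  have "(((*v) (NA A l)) ^^ m) u = 0" using Suc.prems u_def by (simp add: funpow_Suc_right del: funpow.simps)
  then have tu: "(\<lambda>k. corb A u k) \<longlonglongrightarrow> 0" by (rule Suc.IH)
  have Aw: "cmat A *v w = l *s w + u" unfolding u_def NA_apply by simp
  have rec: "norm (corb A w (Suc k)) \<le> cmod l * norm (corb A w k) + norm (corb A u k)" for k
  proof -
    have "corb A w (Suc k) = l *s corb A w k + corb A u k" unfolding corb_Suc' Aw corb_add corb_scale ..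
    then show ?thesis using norm_triangle_ineq[of "l *s corb A w k" "corb A u k"] by (simp add: norm_smult_c)
  qed
  have "(\<lambda>k. norm (corb A w k)) \<longlonglongrightarrow> 0"
  proof (rule rec_decay[where r = "cmod l" and t = "\<lambda>k. norm (corb A u k)"])
    show "(\<lambda>k. norm (corb A u k)) \<longlonglongrightarrow> 0" using tu by (simp add: tendsto_norm_zero_iff)
  qed (use l rec in auto)
  then show ?case by (simp add: tendsto_norm_zero_iff)
qed

lemma decomp:
  fixes A :: "real^'n^'n"
  shows "p \<noteq> 0 \<Longrightarrow> papp A p v = 0 \<Longrightarrow>
    \<exists>v1 v2. v = v1 + v2 \<and> v1 \<in> vec.span (Gset A) \<and> (\<lambda>k. corb A v2 k) \<longlonglongrightarrow> 0"
proof (induction "degree p" arbitrary: p v rule: less_induct)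
  case less
  show ?case
  proof (cases "degree p = 0")
    case True
    then obtain c where c: "p = [:c:]" by (rule degree_eq_zeroE)
    then have "c \<noteq> 0" using less.prems(1) by simp
    then have "v = 0" using less.prems(2) c by (simp add: papp_const vec.scale_eq_0_iff)
    moreover have "corb A 0 = (\<lambda>k. 0)" by (rule ext) simp
    ultimately show ?thesis by (intro exI[of _ 0]) (simp add: vec.span_zero)
  next
    case False
    then have "\<not> constant (poly p)" by (simp add: constant_degree)
    then obtain l where l: "poly p l = 0" using fundamental_theorem_of_algebra by blast
    define m where "m = order l p"
    have m: "m \<noteq> 0" using order_root[of p l] l less.prems(1) m_def by simp
    obtain h where h: "p = [:-l,1:]^m * h" "\<not> [:-l,1:] dvd h"
      using order_decomp[OF less.prems(1), of l] m_def by blast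
    define g where "g = ([:-l,1:]^m :: complex poly)"
    have pgh: "p = g * h" using h g_def by simp
    have h0: "h \<noteq> 0" using less.prems(1) pgh by auto
    have g0: "g \<noteq> 0" unfolding g_def by simp
    have dh: "degree h < degree p"
      using degree_mult_eq[OF g0 h0] pgh m unfolding g_def degree_linear_power by simp
    have pe: "prime_elem [:-l, 1::complex:]" by (rule prime_elem_linear_field_poly) simp
    have cop: "coprime h g" unfolding g_def
      by (rule prime_elem_imp_power_coprime[OF pe h(2)])
    define a where "a = fst (bezout_coefficients h g)"
    define b where "b = snd (bezout_coefficients h g)"
    have ab: "a * h + b * g = 1"
      using bezout_coefficients_fst_snd[of h g] coprime_imp_gcd_eq_1[OF cop] a_def b_def by simp
    define u1 where "u1 = papp A (a * h) v"
    define u2 where "u2 = papp A (b * g) v"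
    have "v = papp A (a * h + b * g) v" using ab by (simp add: papp_1)
    then have vu: "v = u1 + u2" unfolding u1_def u2_def papp_add .
    have gu1: "papp A g u1 = 0"
    proof -
      have "papp A g u1 = papp A (a * p) v" unfolding u1_def papp_mult[symmetric] pgh by (simp add: mult_ac)
      then show ?thesis by (simp add: papp_mult less.prems(2))
    qed
    have hu2: "papp A h u2 = 0"
    proof -
      have "papp A h u2 = papp A (b * p) v" unfolding u2_def papp_mult[symmetric] pgh by (simp add: mult_ac)
      then show ?thesis by (simp add: papp_mult less.prems(2))
    qed
    obtain a1 a2 where a12: "u2 = a1 + a2" "a1 \<in> vec.span (Gset A)" "(\<lambda>k. corb A a2 k) \<longlonglongrightarrow> 0"
      using less.hyps[OF dh h0 hu2] by blast
    have nu1: "(((*v) (NA A l)) ^^ m) u1 = 0" using gu1 unfolding g_def papp_pow_lin .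
    show ?thesis
    proof (cases "1 \<le> cmod l")
      case True
      have "u1 \<in> vec.span (Gset A)"
      proof (cases "u1 = 0")
        case True then show ?thesis by (simp add: vec.span_zero)
      next
        case False
        then have "gen_eigenvector A l u1" using nu1 unfolding gen_eigenvector_def by blast
        then show ?thesis using \<open>1 \<le> cmod l\<close> by (intro vec.span_base) blast
      qed
      then have "u1 + a1 \<in> vec.span (Gset A)" using a12(2) by (simp add: vec.span_add)
      moreover have "v = (u1 + a1) + a2" using vu a12(1) by (simp add: add.assoc)
      ultimately show ?thesis using a12(3) by blast
    next
      case False
      then have "(\<lambda>k. corb A u1 k) \<longlonglongrightarrow> 0" using nil_decay[of l m A u1] nu1 by simp
      then have "(\<lambda>k. corb A (u1 + a2) k) \<longlonglongrightarrow> 0 + 0"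
        unfolding corb_add using a12(3) by (rule tendsto_add)
      moreover have "v = a1 + (u1 + a2)" using vu a12(1) by (simp add: algebra_simps)
      ultimately show ?thesis using a12(2) by auto
    qed
  qed
qed

lemma conjv_diff: "conjv (a - b) = conjv a - conjv b" by (simp add: vec_eq_iff)

lemma conjv_NA: "conjv (NA A l *v w) = NA A (cnj l) *v conjv w"
  by (simp add: NA_apply conjv_diff conjv_mv conjv_scale)

lemma conjv_iter: "conjv ((((*v) (NA A l)) ^^ k) w) = (((*v) (NA A (cnj l))) ^^ k) (conjv w)"
  by (induction k) (simp_all add: conjv_NA)

lemma conj_span:
  assumes "z \<in> vec.span (Gset A)"
  shows "conjv z \<in> vec.span (Gset A)"
proof -
  have "z \<in> {z. conjv z \<in> vec.span (Gset A)}"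
    using assms
  proof (rule vec.span_subspace_induct)
    show "vec.subspace {z. conjv z \<in> vec.span (Gset A)}"
      unfolding vec.subspace_def
      by (auto simp: conjv_add conjv_scale vec.span_zero vec.span_add vec.span_scale)
  next
    fix v assume "v \<in> Gset A"
    then obtain l k where l: "1 \<le> cmod l" "v \<noteq> 0" "((*v) (NA A l) ^^ k) v = 0"
      unfolding gen_eigenvector_def by blast
    then have "gen_eigenvector A (cnj l) (conjv v)"
      unfolding gen_eigenvector_def using conjv_iter[where A=A and l=l and k=k and w=v] by auto
    then have "conjv v \<in> Gset A" using l(1) by (intro CollectI exI[of _ "cnj l"]) simp
    then show "v \<in> {z. conjv z \<in> vec.span (Gset A)}" by (auto intro: vec.span_base)
  qed
  then show ?thesis by simp
qed

lemma orbit_E_inv: "(\<forall>x\<in>E. A *v x \<in> E) \<Longrightarrow> x \<in> E \<Longrightarrow> orbit A x k \<in> E"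
  by (induction k) (simp_all add: orbit_Suc)

lemma orbit_plus: "orbit A x (a + b) = orbit A (orbit A x b) a"
  by (simp add: orbit_def funpow_add)

context projE
begin

lemma conv_all:
  assumes inv: "\<forall>x\<in>E. A *v x \<in> E" and sub: "E_ge1 A \<subseteq> E"
  shows "(\<lambda>k. Pm *v orbit A x k) \<longlonglongrightarrow> 0"
proof -
  obtain p where p: "p \<noteq> 0" "papp A p (cvec x) = 0" using ann_exists by blast
  obtain v1 v2 where v: "cvec x = v1 + v2" "v1 \<in> vec.span (Gset A)" "(\<lambda>k. corb A v2 k) \<longlonglongrightarrow> 0"
    using decomp[OF p] by blast
  define y1 where "y1 = re_v v1"
  define y2 where "y2 = re_v v2"
  have xy: "x = y1 + y2" using arg_cong[OF v(1), of re_v] unfolding y1_def y2_def re_v_add by simp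
  have "cvec y1 \<in> vec.span (Gset A)"
    unfolding y1_def cvec_re_conj using v(2) conj_span[OF v(2)] by (simp add: vec.span_add vec.span_scale)
  then have "y1 \<in> E" using sub unfolding E_ge1_def by auto
  then have z1: "Pm *v orbit A y1 k = 0" for k using orbit_E_inv[OF inv] kerP by simp
  have eq: "Pm *v orbit A x k = Pm *v re_v (corb A v2 k)" for k
    unfolding xy orbit_add matrix_vector_right_distrib z1 re_corb y2_def by simp
  have bnd: "norm (Pm *v re_v (corb A v2 k)) \<le> real CARD('n) * norm Pm * norm (corb A v2 k)" for k
  proof -
    have "norm (Pm *v re_v (corb A v2 k)) \<le> real CARD('n) * norm Pm * norm (re_v (corb A v2 k))"
      by (rule norm_mv_le)
    also have "\<dots> \<le> real CARD('n) * norm Pm * norm (corb A v2 k)"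
      by (rule mult_left_mono[OF norm_re_le]) simp
    finally show ?thesis .
  qed
  have n0: "(\<lambda>k. norm (corb A v2 k)) \<longlonglongrightarrow> 0" using v(3) by (simp only: tendsto_norm_zero_iff)
  have lim: "(\<lambda>k. real CARD('n) * norm Pm * norm (corb A v2 k)) \<longlonglongrightarrow> 0"
    using tendsto_mult[OF tendsto_const n0, of "real CARD('n) * norm Pm"] by simp
  have ev: "\<forall>\<^sub>F k in sequentially. norm (Pm *v re_v (corb A v2 k)) \<le> real CARD('n) * norm Pm * norm (corb A v2 k)"
    using bnd by (intro always_eventually allI)
  have "(\<lambda>k. Pm *v re_v (corb A v2 k)) \<longlonglongrightarrow> 0"
    by (rule Lim_null_comparison[OF ev lim])
  then show ?thesis unfolding eq .
qed

lemma unif_exp: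
  assumes inv: "\<forall>x\<in>E. A *v x \<in> E" and conv: "\<And>x. (\<lambda>k. Pm *v orbit A x k) \<longlonglongrightarrow> 0"
  shows "Stab A Pm"
proof -
  define T where "T k = Pm ** mpow A k" for k
  have Torb: "Pm *v orbit A y k = T k *v y" for y k
    unfolding T_def orbit_mpow matrix_vector_mul_assoc ..
  have TP: "T k *v y = T k *v (Pm *v y)" for k y
  proof -
    have "orbit A (y - Pm *v y) k \<in> E" by (rule orbit_E_inv[OF inv diff_in_E])
    then have "Pm *v orbit A (y - Pm *v y) k = 0" using kerP by simp
    then show ?thesis unfolding orbit_diff matrix_vector_mult_diff_distrib Torb by simp
  qed
  define s where "s k = (\<Sum>i\<in>UNIV. norm (T k *v axis i (1::real)))" for k
  have s0: "0 \<le> s k" for k unfolding s_def by (simp add: sum_nonneg)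
  have s_lim: "s \<longlonglongrightarrow> 0"
    unfolding s_def
  proof (rule tendsto_null_sum)
    fix i :: 'n
    show "(\<lambda>k. norm (T k *v axis i 1)) \<longlonglongrightarrow> 0"
      using conv[of "axis i 1"] unfolding Torb by (simp add: tendsto_norm_zero_iff)
  qed
  have Tb: "norm (T k *v y) \<le> norm y * s k" for k y
  proof -
    have "T k *v y = T k *v (\<Sum>i\<in>UNIV. y $ i *s axis i 1)" by (simp only: basis_expansion)
    also have "\<dots> = (\<Sum>i\<in>UNIV. y $ i *s (T k *v axis i 1))" by (simp add: vec.sum vector_scalar_commute)
    finally have "T k *v y = (\<Sum>i\<in>UNIV. y $ i *s (T k *v axis i 1))" .
    then have "norm (T k *v y) \<le> (\<Sum>i\<in>UNIV. norm (y $ i *s (T k *v axis i 1)))"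
      by (simp add: norm_sum)
    also have "\<dots> = (\<Sum>i\<in>UNIV. \<bar>y $ i\<bar> * norm (T k *v axis i 1))"
      by (simp add: scalar_mult_eq_scaleR)
    also have "\<dots> \<le> (\<Sum>i\<in>UNIV. norm y * norm (T k *v axis i 1))"
      by (intro sum_mono mult_right_mono) (auto simp: component_le_norm_cart)
    also have "\<dots> = norm y * s k" unfolding s_def by (simp add: sum_distrib_left)
    finally show ?thesis .
  qed
  obtain L where L: "L > 0" "\<And>k. norm (s k) \<le> L"
    using convergent_imp_Bseq[OF convergentI[OF s_lim]] by (auto elim: BseqE)
  obtain N where N: "\<And>n. n \<ge> N \<Longrightarrow> norm (s n - 0) < 1/2" using LIMSEQ_D[OF s_lim, of "1/2"] by auto
  define K where "K = Suc N"
  have K: "s K \<le> 1/2" "K > 0" using N[of K] s0[of K] unfolding K_def by auto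
  have qd: "norm (Pm *v orbit A x K) \<le> norm (Pm *v x) / 2" for x
  proof -
    have "norm (Pm *v orbit A x K) = norm (T K *v (Pm *v x))" unfolding Torb TP[of K x] ..
    also have "\<dots> \<le> norm (Pm *v x) * s K" by (rule Tb)
    also have "\<dots> \<le> norm (Pm *v x) * (1/2)" by (rule mult_left_mono) (use K in auto)
    finally show ?thesis by simp
  qed
  have qL: "norm (Pm *v orbit A x j) \<le> L * norm (Pm *v x)" for x j
  proof -
    have "norm (Pm *v orbit A x j) = norm (T j *v (Pm *v x))" unfolding Torb TP[of j x] ..
    also have "\<dots> \<le> norm (Pm *v x) * s j" by (rule Tb)
    also have "\<dots> \<le> norm (Pm *v x) * L" using L(2)[of j] s0[of j] by (intro mult_left_mono) auto
    finally show ?thesis by (simp add: mult.commute)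
  qed
  have main: "norm (Pm *v orbit A x (m * K + j)) \<le> (1/2)^m * L * norm (Pm *v x)" for m j x
  proof (induction m)
    case 0 then show ?case using qL by simp
  next
    case (Suc m)
    have "norm (Pm *v orbit A x (Suc m * K + j)) = norm (Pm *v orbit A (orbit A x (m * K + j)) K)"
      by (simp add: orbit_plus[symmetric] add.assoc)
    also have "\<dots> \<le> norm (Pm *v orbit A x (m * K + j)) / 2" by (rule qd)
    also have "\<dots> \<le> (1/2)^m * L * norm (Pm *v x) / 2" using Suc by simp
    finally show ?case by simp
  qed
  define \<beta> where "\<beta> = ln 2 / real K"
  have b: "\<beta> > 0" unfolding \<beta>_def using K by simp
  have "norm (Pm *v orbit A x k) \<le> (2 * L) * norm (Pm *v x) * exp (- \<beta> * real k)" for x k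
  proof -
    define m where "m = k div K"
    define j where "j = k mod K"
    have kk: "k = m * K + j" unfolding m_def j_def by simp
    have jK: "j < K" unfolding j_def using K by simp
    have "(1/2::real)^m \<le> 2 * exp (- \<beta> * real k)"
    proof -
      have h2: "(1/2::real)^m = exp (real m * (- ln 2))"
        by (simp add: exp_of_nat_mult exp_minus power_one_over inverse_eq_divide)
      have mk: "(m + 1) * K = m * K + K" by (simp add: algebra_simps)
      have "k < (m + 1) * K" using jK kk mk by linarith
      then have "real k < real ((m + 1) * K)" by (simp only: of_nat_less_iff)
      then have "real k < (real m + 1) * real K" by (simp add: algebra_simps)
      then have kK: "real k / real K \<le> real m + 1" using K by (simp add: divide_le_eq)
      have bk: "\<beta> * real k = ln 2 * (real k / real K)" by (simp add: \<beta>_def)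
      have "ln 2 * (real k / real K) \<le> ln 2 * (real m + 1)"
        by (rule mult_left_mono[OF kK]) simp
      then have "real m * (- ln 2) \<le> ln 2 + (- \<beta> * real k)"
        using bk by (simp add: algebra_simps)
      then have "exp (real m * (- ln 2)) \<le> exp (ln 2 + (- \<beta> * real k))" by simp
      also have "\<dots> = exp (ln 2) * exp (- \<beta> * real k)" by (rule exp_add)
      also have "\<dots> = 2 * exp (- \<beta> * real k)" by simp
      finally show ?thesis using h2 by simp
    qed
    have "norm (Pm *v orbit A x k) \<le> (1/2)^m * L * norm (Pm *v x)" unfolding kk by (rule main)
    also have "\<dots> \<le> (2 * exp (- \<beta> * real k)) * L * norm (Pm *v x)"
      using \<open>(1/2::real)^m \<le> _\<close> L by (intro mult_right_mono) auto
    finally show ?thesis by (simp add: mult_ac)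
  qed
  moreover have "2 * L > 0" using L by simp
  ultimately show ?thesis unfolding Stab_def using b by blast
qed

lemma cond1_Stab: "cond1 A E \<Longrightarrow> Stab A Pm"
  unfolding cond1_def using unif_exp conv_all by blast

lemma Stab_cond1: "Stab A Pm \<Longrightarrow> cond1 A E"
  unfolding cond1_def using Stab_inv Stab_Ege1 by blast

end

theorem theorem2:
  fixes A :: "real^'n^'n" and E :: "(real^'n) set"
  assumes "subspace E"
  shows "(cond1 A E \<longleftrightarrow> cond2 A E) \<and> (cond1 A E \<longleftrightarrow> cond3 A E)
       \<and> (cond1 A E \<longleftrightarrow> cond4 A E) \<and> (cond1 A E \<longleftrightarrow> cond5 A E)
       \<and> (subspace (E_ge1 A) \<and> cond1 A (E_ge1 A) \<and> (cond1 A E \<longrightarrow> E_ge1 A \<subseteq> E))"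
proof -
  obtain Pm where Pm: "\<forall>x. Pm *v x = 0 \<longleftrightarrow> x \<in> E" "transpose Pm = Pm" "\<forall>x. Pm *v (Pm *v x) = Pm *v x"
    using proj_exists[OF assms] by blast
  interpret projE E Pm using assms Pm by unfold_locales auto
  have c1: "cond1 A E \<longleftrightarrow> Stab A Pm" using cond1_Stab Stab_cond1 by blast
  have c2: "cond2 A E \<longleftrightarrow> Stab A Pm" using cond2_Stab Stab_cond3 cond3_cond2 by blast
  have c3: "cond3 A E \<longleftrightarrow> Stab A Pm" using cond3_cond2 cond2_Stab Stab_cond3 by blast
  have c4: "cond4 A E \<longleftrightarrow> Stab A Pm" using cond4_Stab Stab_cond5 cond5_cond4 by blast
  have c5: "cond5 A E \<longleftrightarrow> Stab A Pm" using cond5_cond4 cond4_Stab Stab_cond5 by blast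
  have e: "subspace (E_ge1 A)" by (rule Ege1_subspace)
  have f: "cond1 A (E_ge1 A)" unfolding cond1_def using Ege1_inv by blast
  have g: "cond1 A E \<longrightarrow> E_ge1 A \<subseteq> E" unfolding cond1_def by blast
  show ?thesis using c1 c2 c3 c4 c5 e f g by blast
qed

end
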